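(* Let $f:\mathbb{R}^d\to\mathbb{R}$ be $\beta$-smooth and $\mu$-strongly convex with minimizer $w^*$ and $f^*=f(w^* )$. Run $K$ workers with partial-synchronization local SGD as described in the context, from a common initial point $w_0$, for $R$ iterations, with layer synchronization indices $H_l\le H$ for $l=1,\dots,L$, and with stepsizes $\eta_r=\frac{4}{\mu(a+r)}$ where the shift parameter satisfies $a>\max\{16\kappa,H\}$ with $\kappa=\frac{\beta}{\mu}$. Assume that for all $r=0,1,\dots,R-1$ and all $k\in\{1,\dots,K\}$, $\mathbb{E}_{\xi_r^k}\|\nabla f(w_r^k;\xi_r^k)-\nabla f(w_r^k)\|^2\le\sigma^2$ and $\mathbb{E}_{\xi_r^k}\|\nabla f(w_r^k;\xi_r^k)\|^2\le G^2$. Let $p_r=(a+r)^2$, $S_R=\sum_{r=0}^{R-1}p_r$ (so that $S_R\ge \frac13 R^3$), and $\hat w_R=\frac{1}{KS_R}\sum_{k=1}^K\sum_{r=0}^{R-1}p_r w_r^k$. Then $$\mathbb{E}f(\hat w_R)-f^*\le \frac{\mu a^3}{2S_R}\|w_0-w^*\|^2+\frac{4R(R+2a)}{\mu K S_R}\sigma^2+\frac{256R}{\mu^2 S_R}G^2H^2\beta.$$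
   Context: Partial-synchronization local SGD: the parameter vector $w\in\mathbb{R}^d$ is split into $L$ layer blocks $w=(w^{1},\dots,w^{L})$. Each layer $l$ is assigned an index $H_l\in\{1,\dots,H\}$, where $H$ is the synchronization period. Worker $k\in\{1,\dots,K\}$ holds $w_r^k$ at iteration $r$ (all workers start at $w_0^k=w_0$), samples independent noise $\xi_r^k$, and computes the stochastic gradient $\nabla f(w_r^k;\xi_r^k)$ (an unbiased estimate of $\nabla f(w_r^k)$) of the full model; $\nabla^l f(w_r^k;\xi_r^k)$ denotes its block for layer $l$. The update for each layer $l$ is: $w_{r+1}^{k,l}=w_r^{k,l}-\eta_r\nabla^l f(w_r^k;\xi_r^k)$ if $r+1\not\equiv H_l \pmod H$, and $w_{r+1}^{k,l}=\frac1K\sum_{j=1}^K\big(w_r^{j,l}-\eta_r\nabla^l f(w_r^j;\xi_r^j)\big)$ if $r+1\equiv H_l\pmod H$. *)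

theory Defs
  imports "HOL-Analysis.Analysis" "HOL-Probability.Probability"
begin

definition smooth_with_grad :: "(real^'d \<Rightarrow> real) \<Rightarrow> (real^'d \<Rightarrow> real^'d) \<Rightarrow> real \<Rightarrow> bool" where
  "smooth_with_grad f grad \<beta> \<longleftrightarrow>
     (\<forall>w. (f has_derivative (\<lambda>h. grad w \<bullet> h)) (at w)) \<and>
     (\<forall>x y. norm (grad x - grad y) \<le> \<beta> * norm (x - y))"

definition strongly_convex :: "(real^'d \<Rightarrow> real) \<Rightarrow> real \<Rightarrow> bool" where
  "strongly_convex f \<mu> \<longleftrightarrow> \<mu> > 0 \<and>
     (\<forall>x y t. 0 \<le> t \<and> t \<le> 1 \<longrightarrow>
        f (t *\<^sub>R x + (1 - t) *\<^sub>R y) \<le> t * f x + (1 - t) * f y - \<mu> / 2 * t * (1 - t) * (norm (x - y))\<^sup>2)"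

text \<open>Coordinate i of the parameter vector belongs to layer (layer i); layer l has
  synchronization index Hl l.  Workers are 1..K.  psgd ... r k is w_r^k.\<close>
primrec psgd :: "real^'d \<Rightarrow> (real^'d \<Rightarrow> 'b \<Rightarrow> real^'d) \<Rightarrow> (nat \<Rightarrow> nat \<Rightarrow> 'b) \<Rightarrow> (nat \<Rightarrow> real)
     \<Rightarrow> nat \<Rightarrow> ('d \<Rightarrow> nat) \<Rightarrow> (nat \<Rightarrow> nat) \<Rightarrow> nat \<Rightarrow> nat \<Rightarrow> nat \<Rightarrow> real^'d" where
  "psgd w0 g xi eta H layer Hl K 0 k = w0"
| "psgd w0 g xi eta H layer Hl K (Suc r) k =
     (\<chi> i. if Suc r mod H = Hl (layer i) mod H
           then (\<Sum>j=1..K. psgd w0 g xi eta H layer Hl K r j $ i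
                      - eta r * g (psgd w0 g xi eta H layer Hl K r j) (xi r j) $ i) / real K
           else psgd w0 g xi eta H layer Hl K r k $ i
                      - eta r * g (psgd w0 g xi eta H layer Hl K r k) (xi r k) $ i)"

end

theory Submission
  imports Defs
begin

lemma deriv_line:
  fixes f :: "real^'d \<Rightarrow> real"
  assumes "smooth_with_grad f grad \<beta>"
  shows "((\<lambda>s. f (x + s *\<^sub>R h)) has_real_derivative (grad (x + s *\<^sub>R h) \<bullet> h)) (at s within S)"
proof -
  have d: "(f has_derivative (\<lambda>v. grad w \<bullet> v)) (at w)" for w
    using assms by (simp add: smooth_with_grad_def)
  have l: "((\<lambda>s. x + s *\<^sub>R h) has_derivative (\<lambda>s. s *\<^sub>R h)) (at s within S)"
    by (auto intro!: derivative_eq_intros)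
  have "((\<lambda>s. f (x + s *\<^sub>R h)) has_derivative (\<lambda>v. grad (x + s *\<^sub>R h) \<bullet> (v *\<^sub>R h))) (at s within S)"
    using has_derivative_compose[OF l d] by simp
  then show ?thesis
    unfolding has_field_derivative_def by (rule has_derivative_eq_rhs) (auto simp: fun_eq_iff)
qed

lemma descent:
  fixes f :: "real^'d \<Rightarrow> real"
  assumes sm: "smooth_with_grad f grad \<beta>"
  shows "f y \<le> f x + grad x \<bullet> (y - x) + \<beta> / 2 * (norm (y - x))\<^sup>2"
proof -
  define h where "h = y - x"
  define \<psi> where "\<psi> s = f (x + s *\<^sub>R h) - s * (grad x \<bullet> h) - \<beta> / 2 * s\<^sup>2 * (norm h)\<^sup>2" for s
  have L: "norm (grad u - grad v) \<le> \<beta> * norm (u - v)" for u v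
    using sm by (simp add: smooth_with_grad_def)
  have "\<psi> 1 \<le> \<psi> 0"
  proof (rule DERIV_nonpos_imp_nonincreasing[of 0 1 \<psi>])
    fix s :: real assume s0: "0 \<le> s" and s1: "s \<le> 1"
    note s = s0 s1
    have D: "(\<psi> has_real_derivative (grad (x + s *\<^sub>R h) \<bullet> h - grad x \<bullet> h - \<beta> * s * (norm h)\<^sup>2)) (at s)"
      unfolding \<psi>_def
      by (rule derivative_eq_intros deriv_line[OF sm] | simp)+
    have "grad (x + s *\<^sub>R h) \<bullet> h - grad x \<bullet> h = (grad (x + s *\<^sub>R h) - grad x) \<bullet> h"
      by (simp add: inner_diff_left)
    also have "\<dots> \<le> norm (grad (x + s *\<^sub>R h) - grad x) * norm h"
      by (rule norm_cauchy_schwarz)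
    also have "\<dots> \<le> \<beta> * norm (s *\<^sub>R h) * norm h"
      using L[of "x + s *\<^sub>R h" x] by (simp add: mult_right_mono)
    also have "\<dots> = \<beta> * s * (norm h)\<^sup>2" using s by (simp add: power2_eq_square)
    finally show "\<exists>y. (\<psi> has_real_derivative y) (at s) \<and> y \<le> 0"
      using D by (intro exI[of _ "grad (x + s *\<^sub>R h) \<bullet> h - grad x \<bullet> h - \<beta> * s * (norm h)\<^sup>2"]) auto
  qed simp
  then show ?thesis by (simp add: \<psi>_def h_def)
qed

lemma sc_grad:
  fixes f :: "real^'d \<Rightarrow> real"
  assumes sm: "smooth_with_grad f grad \<beta>" and sc: "strongly_convex f \<mu>"
  shows "f x + grad x \<bullet> (y - x) + \<mu> / 2 * (norm (y - x))\<^sup>2 \<le> f y"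
proof -
  define h where "h = y - x"
  have D: "((\<lambda>s. f (x + s *\<^sub>R h)) has_real_derivative (grad x \<bullet> h)) (at 0 within {0<..})"
    using deriv_line[OF sm, of x h 0] by simp
  then have T: "((\<lambda>s. (f (x + s *\<^sub>R h) - f x) / s) \<longlongrightarrow> grad x \<bullet> h) (at_right 0)"
    by (simp add: has_field_derivative_iff)
  have T2: "((\<lambda>s. f y - f x - \<mu> / 2 * (1 - s) * (norm h)\<^sup>2) \<longlongrightarrow> f y - f x - \<mu> / 2 * (1 - 0) * (norm h)\<^sup>2) (at_right 0)"
    by (intro tendsto_intros)
  have ev: "\<forall>\<^sub>F s in at_right 0. (f (x + s *\<^sub>R h) - f x) / s \<le> f y - f x - \<mu> / 2 * (1 - s) * (norm h)\<^sup>2"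
    using eventually_at_right_real[OF zero_less_one]
  proof (rule eventually_mono)
    fix s :: real assume s: "s \<in> {0<..<1}"
    have "f (s *\<^sub>R y + (1 - s) *\<^sub>R x) \<le> s * f y + (1 - s) * f x - \<mu> / 2 * s * (1 - s) * (norm (y - x))\<^sup>2"
      using sc s unfolding strongly_convex_def by auto
    moreover have "s *\<^sub>R y + (1 - s) *\<^sub>R x = x + s *\<^sub>R h"
      by (simp add: h_def algebra_simps)
    ultimately have "f (x + s *\<^sub>R h) - f x \<le> s * (f y - f x - \<mu> / 2 * (1 - s) * (norm h)\<^sup>2)"
      by (simp add: h_def algebra_simps)
    then show "(f (x + s *\<^sub>R h) - f x) / s \<le> f y - f x - \<mu> / 2 * (1 - s) * (norm h)\<^sup>2"
      using s by (simp add: divide_le_eq mult.commute)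
  qed
  have "grad x \<bullet> h \<le> f y - f x - \<mu> / 2 * (1 - 0) * (norm h)\<^sup>2"
    by (rule tendsto_le[OF _ T2 T ev]) simp
  then show ?thesis by (simp add: h_def)
qed

lemma norm_sum_sq_le:
  fixes v :: "'k \<Rightarrow> 'a::real_normed_vector"
  shows "(norm (\<Sum>k\<in>A. v k))\<^sup>2 \<le> real (card A) * (\<Sum>k\<in>A. (norm (v k))\<^sup>2)"
proof -
  have "norm (\<Sum>k\<in>A. v k) \<le> (\<Sum>k\<in>A. norm (v k))" by (rule norm_sum)
  then have "(norm (\<Sum>k\<in>A. v k))\<^sup>2 \<le> (\<Sum>k\<in>A. norm (v k))\<^sup>2"
    by (simp add: power_mono)
  also have "\<dots> \<le> (\<Sum>k\<in>A. (norm (v k))\<^sup>2) * card A" by (rule sum_squared_le_sum_of_squares)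
  finally show ?thesis by (simp add: mult.commute)
qed

lemma grad_sq_bound:
  fixes f :: "real^'d \<Rightarrow> real"
  assumes sm: "smooth_with_grad f grad \<beta>" and b: "\<beta> > 0" and mn: "\<forall>v. f wstar \<le> f v"
  shows "(norm (grad x))\<^sup>2 \<le> 2 * \<beta> * (f x - f wstar)"
proof -
  define y where "y = x - (1/\<beta>) *\<^sub>R grad x"
  have "f y \<le> f x + grad x \<bullet> (y - x) + \<beta> / 2 * (norm (y - x))\<^sup>2" by (rule descent[OF sm])
  also have "grad x \<bullet> (y - x) = - (1/\<beta>) * (norm (grad x))\<^sup>2"
    by (simp add: y_def power2_norm_eq_inner)
  also have "\<beta> / 2 * (norm (y - x))\<^sup>2 = (1/(2*\<beta>)) * (norm (grad x))\<^sup>2"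
    using b by (simp add: y_def power2_eq_square)
  finally have "f wstar \<le> f x - (1/(2*\<beta>)) * (norm (grad x))\<^sup>2"
    using mn[rule_format, of y] by (simp add: field_simps)
  then show ?thesis using b by (simp add: field_simps)
qed

lemma mu_le_beta:
  fixes f :: "real^'d \<Rightarrow> real"
  assumes sm: "smooth_with_grad f grad \<beta>" and sc: "strongly_convex f \<mu>"
  shows "\<mu> \<le> \<beta>"
proof -
  obtain i :: 'd where True by blast
  define h :: "real^'d" where "h = axis i 1"
  have hn: "norm h = 1" by (simp add: h_def)
  have "f 0 + grad 0 \<bullet> (h - 0) + \<mu> / 2 * (norm (h - 0))\<^sup>2 \<le> f h" by (rule sc_grad[OF sm sc])
  moreover have "f h \<le> f 0 + grad 0 \<bullet> (h - 0) + \<beta> / 2 * (norm (h - 0))\<^sup>2" by (rule descent[OF sm])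
  ultimately show ?thesis using hn by simp
qed

lemma jensen_f:
  fixes f :: "real^'d \<Rightarrow> real"
  assumes sm: "smooth_with_grad f grad \<beta>" and sc: "strongly_convex f \<mu>"
    and fin: "finite A" and lam: "\<forall>k\<in>A. 0 \<le> lam k" "(\<Sum>k\<in>A. lam k) = 1"
  shows "f (\<Sum>k\<in>A. lam k *\<^sub>R x k) \<le> (\<Sum>k\<in>A. lam k * f (x k))"
proof -
  define z where "z = (\<Sum>k\<in>A. lam k *\<^sub>R x k)"
  have mu: "\<mu> > 0" using sc by (simp add: strongly_convex_def)
  have "lam k * (f z + grad z \<bullet> (x k - z)) \<le> lam k * f (x k)" if "k \<in> A" for k
  proof -
    have "f z + grad z \<bullet> (x k - z) + \<mu> / 2 * (norm (x k - z))\<^sup>2 \<le> f (x k)" by (rule sc_grad[OF sm sc])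
    moreover have "0 \<le> \<mu> / 2 * (norm (x k - z))\<^sup>2" using mu by simp
    ultimately show ?thesis using lam that by (intro mult_left_mono) auto
  qed
  then have "(\<Sum>k\<in>A. lam k * (f z + grad z \<bullet> (x k - z))) \<le> (\<Sum>k\<in>A. lam k * f (x k))"
    by (rule sum_mono)
  moreover have "(\<Sum>k\<in>A. lam k * (f z + grad z \<bullet> (x k - z))) = f z + grad z \<bullet> (z - z)"
  proof -
    have "(\<Sum>k\<in>A. lam k * (f z + grad z \<bullet> (x k - z)))
        = (\<Sum>k\<in>A. lam k) * f z + grad z \<bullet> (\<Sum>k\<in>A. lam k *\<^sub>R x k) - (\<Sum>k\<in>A. lam k) * (grad z \<bullet> z)"
      by (simp add: algebra_simps sum.distrib sum_subtractf inner_sum_right sum_distrib_right sum_distrib_left inner_diff_right)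
    then show ?thesis using lam by (simp add: z_def)
  qed
  ultimately show ?thesis by (simp add: z_def)
qed

lemma young_inner:
  fixes a b :: "real^'d"
  assumes "\<beta> > 0"
  shows "- 2 * (a \<bullet> b) \<le> 2 * \<beta> * (norm a)\<^sup>2 + (norm b)\<^sup>2 / (2 * \<beta>)"
proof -
  have "0 \<le> (norm ((2*\<beta>) *\<^sub>R a + b))\<^sup>2" by simp
  also have "\<dots> = 4*\<beta>^2 * (norm a)\<^sup>2 + 4*\<beta>*(a \<bullet> b) + (norm b)\<^sup>2"
    unfolding power2_norm_eq_inner by (simp add: inner_add_left inner_add_right algebra_simps power2_eq_square inner_commute)
  finally have "0 \<le> 4*\<beta>^2 * (norm a)\<^sup>2 + 4*\<beta>*(a \<bullet> b) + (norm b)\<^sup>2" .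
  then have "0 \<le> (4*\<beta>^2 * (norm a)\<^sup>2 + 4*\<beta>*(a \<bullet> b) + (norm b)\<^sup>2) / (2*\<beta>)" using assms by simp
  also have "(4*\<beta>^2 * (norm a)\<^sup>2 + 4*\<beta>*(a \<bullet> b) + (norm b)\<^sup>2) / (2*\<beta>) = 2*\<beta>*(norm a)\<^sup>2 + 2*(a \<bullet> b) + (norm b)\<^sup>2 / (2*\<beta>)"
    using assms by (simp add: field_simps power2_eq_square)
  finally show ?thesis by simp
qed

lemma step_det:
  fixes f :: "real^'d \<Rightarrow> real" and x :: "'k \<Rightarrow> real^'d"
  assumes sm: "smooth_with_grad f grad \<beta>" and sc: "strongly_convex f \<mu>"
    and mn: "\<forall>v. f wstar \<le> f v" and b: "\<beta> > 0" and eta: "0 < \<eta>" "\<eta> \<le> 1 / (4 * \<beta>)"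
    and fin: "finite A" "A \<noteq> {}"
  defines "n \<equiv> real (card A)"
  defines "xb \<equiv> (1/n) *\<^sub>R (\<Sum>k\<in>A. x k)"
    and "gb \<equiv> (1/n) *\<^sub>R (\<Sum>k\<in>A. grad (x k))"
  defines "V \<equiv> (1/n) * (\<Sum>k\<in>A. (norm (xb - x k))\<^sup>2)"
  shows "(norm (xb - wstar - \<eta> *\<^sub>R gb))\<^sup>2 + \<eta> / 2 * (f xb - f wstar)
         \<le> (1 - \<mu> * \<eta>) * (norm (xb - wstar))\<^sup>2 + 2 * \<beta> * \<eta> * V"
proof -
  have npos: "n > 0" using fin by (simp add: n_def card_gt_0_iff)
  define u where "u = xb - wstar"
  define \<delta> where "\<delta> k = f (x k) - f wstar" for k
  define ad where "ad = (1/n) * (\<Sum>k\<in>A. \<delta> k)"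
  define ax where "ax = (1/n) * (\<Sum>k\<in>A. (norm (x k - wstar))\<^sup>2)"
  have mu: "\<mu> > 0" using sc by (simp add: strongly_convex_def)
  have dpos: "\<delta> k \<ge> 0" for k using mn by (simp add: \<delta>_def)
  have expand: "(norm (u - \<eta> *\<^sub>R gb))\<^sup>2 = (norm u)\<^sup>2 - 2 * \<eta> * (u \<bullet> gb) + \<eta>\<^sup>2 * (norm gb)\<^sup>2"
    unfolding power2_norm_eq_inner by (simp add: inner_diff_left inner_diff_right algebra_simps power2_eq_square inner_commute)
  have per: "- 2 * (u \<bullet> grad (x k)) \<le> 2 * \<beta> * (norm (xb - x k))\<^sup>2 - \<delta> k - \<mu> * (norm (x k - wstar))\<^sup>2" for k
  proof -
    have y1: "- 2 * ((xb - x k) \<bullet> grad (x k)) \<le> 2 * \<beta> * (norm (xb - x k))\<^sup>2 + (norm (grad (x k)))\<^sup>2 / (2 * \<beta>)"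
      by (rule young_inner[OF b])
    have g: "(norm (grad (x k)))\<^sup>2 / (2 * \<beta>) \<le> \<delta> k"
      using grad_sq_bound[OF sm b mn, of "x k"] b by (simp add: \<delta>_def field_simps)
    have s: "f (x k) + grad (x k) \<bullet> (wstar - x k) + \<mu> / 2 * (norm (wstar - x k))\<^sup>2 \<le> f wstar"
      by (rule sc_grad[OF sm sc])
    have "norm (wstar - x k) = norm (x k - wstar)" by (rule norm_minus_commute)
    moreover have "u \<bullet> grad (x k) = (xb - x k) \<bullet> grad (x k) - (wstar - x k) \<bullet> grad (x k)"
      by (simp add: u_def inner_diff_left)
    ultimately show ?thesis using y1 g s by (simp add: \<delta>_def inner_commute algebra_simps)
  qed
  have ug: "u \<bullet> gb = (1/n) * (\<Sum>k\<in>A. u \<bullet> grad (x k))"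
    by (simp add: gb_def inner_sum_right)
  have cross: "- 2 * \<eta> * (u \<bullet> gb) \<le> \<eta> * (2 * \<beta> * V - ad - \<mu> * ax)"
  proof -
    have "(\<Sum>k\<in>A. - 2 * (u \<bullet> grad (x k))) \<le> (\<Sum>k\<in>A. 2 * \<beta> * (norm (xb - x k))\<^sup>2 - \<delta> k - \<mu> * (norm (x k - wstar))\<^sup>2)"
      by (rule sum_mono[OF per])
    also have "\<dots> = 2 * \<beta> * (\<Sum>k\<in>A. (norm (xb - x k))\<^sup>2) - (\<Sum>k\<in>A. \<delta> k) - \<mu> * (\<Sum>k\<in>A. (norm (x k - wstar))\<^sup>2)"
      by (simp add: sum_subtractf sum_distrib_left)
    finally have "- 2 * (\<Sum>k\<in>A. u \<bullet> grad (x k)) \<le> 2 * \<beta> * (\<Sum>k\<in>A. (norm (xb - x k))\<^sup>2) - (\<Sum>k\<in>A. \<delta> k) - \<mu> * (\<Sum>k\<in>A. (norm (x k - wstar))\<^sup>2)"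
      by (simp add: sum_distrib_left[symmetric] sum_negf)
    then have "(1/n) * (- 2 * (\<Sum>k\<in>A. u \<bullet> grad (x k))) \<le> (1/n) * (2 * \<beta> * (\<Sum>k\<in>A. (norm (xb - x k))\<^sup>2) - (\<Sum>k\<in>A. \<delta> k) - \<mu> * (\<Sum>k\<in>A. (norm (x k - wstar))\<^sup>2))"
      using npos by (intro mult_left_mono) auto
    then have "- 2 * (u \<bullet> gb) \<le> 2 * \<beta> * V - ad - \<mu> * ax"
      by (simp add: ug V_def ad_def ax_def algebra_simps)
    then have "\<eta> * (- 2 * (u \<bullet> gb)) \<le> \<eta> * (2 * \<beta> * V - ad - \<mu> * ax)"
      using eta by (intro mult_left_mono) auto
    then show ?thesis by (simp add: algebra_simps)
  qed
  have gsq: "(norm gb)\<^sup>2 \<le> 2 * \<beta> * ad"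
  proof -
    have "(norm gb)\<^sup>2 = (1/n)\<^sup>2 * (norm (\<Sum>k\<in>A. grad (x k)))\<^sup>2"
      using npos by (simp add: gb_def power_divide)
    also have "\<dots> \<le> (1/n)\<^sup>2 * (n * (\<Sum>k\<in>A. (norm (grad (x k)))\<^sup>2))"
      using norm_sum_sq_le[of "\<lambda>k. grad (x k)" A] by (simp add: n_def mult_left_mono)
    also have "\<dots> = (1/n) * (\<Sum>k\<in>A. (norm (grad (x k)))\<^sup>2)"
      using npos by (simp add: power2_eq_square)
    also have "\<dots> \<le> (1/n) * (\<Sum>k\<in>A. 2 * \<beta> * \<delta> k)"
      using grad_sq_bound[OF sm b mn] npos by (intro mult_left_mono sum_mono) (auto simp: \<delta>_def)
    also have "\<dots> = 2 * \<beta> * ad" by (simp add: ad_def sum_distrib_left)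
    finally show ?thesis .
  qed
  have jx: "(norm u)\<^sup>2 \<le> ax"
  proof -
    have "u = (1/n) *\<^sub>R (\<Sum>k\<in>A. x k - wstar)"
      using npos by (simp add: u_def xb_def sum_subtractf n_def scaleR_diff_right sum_constant_scaleR del: sum_constant)
    then have "(norm u)\<^sup>2 = (1/n)\<^sup>2 * (norm (\<Sum>k\<in>A. x k - wstar))\<^sup>2"
      using npos by (simp add: power_divide)
    also have "\<dots> \<le> (1/n)\<^sup>2 * (n * (\<Sum>k\<in>A. (norm (x k - wstar))\<^sup>2))"
      using norm_sum_sq_le[of "\<lambda>k. x k - wstar" A] by (simp add: n_def mult_left_mono)
    also have "\<dots> = ax" using npos by (simp add: ax_def power2_eq_square)
    finally show ?thesis .
  qed
  have jf: "f xb - f wstar \<le> ad"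
  proof -
    have "f xb = f (\<Sum>k\<in>A. (1/n) *\<^sub>R x k)" by (simp add: xb_def scaleR_sum_right)
    also have "\<dots> \<le> (\<Sum>k\<in>A. (1/n) * f (x k))"
      using npos fin by (intro jensen_f[OF sm sc]) (auto simp: n_def)
    also have "\<dots> = (1/n) * (\<Sum>k\<in>A. f (x k))" by (simp add: sum_distrib_left)
    finally have "f xb \<le> (1/n) * (\<Sum>k\<in>A. f (x k))" .
    moreover have "ad = (1/n) * (\<Sum>k\<in>A. f (x k)) - f wstar"
      using npos by (simp add: ad_def \<delta>_def sum_subtractf n_def field_simps)
    ultimately show ?thesis by simp
  qed
  have adpos: "0 \<le> ad" using npos dpos by (simp add: ad_def sum_nonneg)
  have e2: "2 * \<beta> * \<eta>\<^sup>2 \<le> \<eta> / 2"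
  proof -
    have "2 * \<beta> * \<eta> \<le> 1/2" using eta b by (simp add: field_simps)
    then have "(2 * \<beta> * \<eta>) * \<eta> \<le> (1/2) * \<eta>" using eta by (intro mult_right_mono) auto
    then show ?thesis by (simp add: power2_eq_square algebra_simps)
  qed
  have "(norm (u - \<eta> *\<^sub>R gb))\<^sup>2 + \<eta> / 2 * (f xb - f wstar)
      \<le> (norm u)\<^sup>2 + \<eta> * (2 * \<beta> * V - ad - \<mu> * ax) + \<eta>\<^sup>2 * (2 * \<beta> * ad) + \<eta> / 2 * ad"
  proof -
    have "\<eta>\<^sup>2 * (norm gb)\<^sup>2 \<le> \<eta>\<^sup>2 * (2 * \<beta> * ad)" using gsq by (simp add: mult_left_mono)
    moreover have "\<eta> / 2 * (f xb - f wstar) \<le> \<eta> / 2 * ad" using jf eta by (simp add: mult_left_mono)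
    ultimately show ?thesis using expand cross by linarith
  qed
  also have "\<dots> \<le> (norm u)\<^sup>2 + \<eta> * (2 * \<beta> * V - ad - \<mu> * (norm u)\<^sup>2) + (\<eta>/2) * ad + \<eta> / 2 * ad"
  proof -
    have "\<eta> * \<mu> * (norm u)\<^sup>2 \<le> \<eta> * \<mu> * ax" using jx eta mu by (simp add: mult_left_mono)
    moreover have "\<eta>\<^sup>2 * (2 * \<beta> * ad) \<le> (\<eta>/2) * ad" using e2 adpos
      by (metis mult.assoc mult.commute mult_right_mono)
    ultimately show ?thesis by (simp add: algebra_simps)
  qed
  also have "\<dots> = (1 - \<mu> * \<eta>) * (norm u)\<^sup>2 + 2 * \<beta> * \<eta> * V" by (simp add: algebra_simps)
  finally show ?thesis by (simp add: u_def)
qed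

lemma psgd_Suc_comp:
  "psgd w0 g xi eta H layer Hl K (Suc r) k $ i =
     (if Suc r mod H = Hl (layer i) mod H
      then (\<Sum>j=1..K. psgd w0 g xi eta H layer Hl K r j $ i
              - eta r * g (psgd w0 g xi eta H layer Hl K r j) (xi r j) $ i) / real K
      else psgd w0 g xi eta H layer Hl K r k $ i
              - eta r * g (psgd w0 g xi eta H layer Hl K r k) (xi r k) $ i)"
  by simp

lemma psgd_sum_Suc:
  assumes K: "K \<ge> 1"
  shows "(\<Sum>k=1..K. psgd w0 g xi eta H layer Hl K (Suc r) k)
       = (\<Sum>k=1..K. psgd w0 g xi eta H layer Hl K r k)
         - eta r *\<^sub>R (\<Sum>k=1..K. g (psgd w0 g xi eta H layer Hl K r k) (xi r k))"
proof (rule vec_eq_iff[THEN iffD2], rule allI)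
  fix i
  let ?P = "psgd w0 g xi eta H layer Hl K"
  show "(\<Sum>k=1..K. ?P (Suc r) k) $ i = ((\<Sum>k=1..K. ?P r k) - eta r *\<^sub>R (\<Sum>k=1..K. g (?P r k) (xi r k))) $ i"
  proof (cases "Suc r mod H = Hl (layer i) mod H")
    case True
    then have "(\<Sum>k=1..K. ?P (Suc r) k) $ i = (\<Sum>k=1..K. (\<Sum>j=1..K. ?P r j $ i - eta r * g (?P r j) (xi r j) $ i) / real K)"
      unfolding sum_component using True by (auto intro!: sum.cong)
    also have "\<dots> = (\<Sum>j=1..K. ?P r j $ i - eta r * g (?P r j) (xi r j) $ i)"
      using K by simp
    finally show ?thesis by (simp add: sum_subtractf sum_distrib_left)
  next
    case False
    then show ?thesis by (simp add: sum_subtractf sum_distrib_left)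
  qed
qed

lemma psgd_local:
  assumes "\<And>r j. r < t \<Longrightarrow> j \<in> {1..K} \<Longrightarrow> xi r j = xi' r j"
  shows "k \<in> {1..K} \<Longrightarrow> psgd w0 g xi eta H layer Hl K t k = psgd w0 g xi' eta H layer Hl K t k"
  using assms
proof (induction t arbitrary: k)
  case 0
  then show ?case by simp
next
  case (Suc t)
  have IH: "\<forall>j\<in>{1..K}. psgd w0 g xi eta H layer Hl K t j = psgd w0 g xi' eta H layer Hl K t j \<and> xi t j = xi' t j"
    using Suc.IH Suc.prems(2) by auto
  have S: "(\<Sum>j=1..K. psgd w0 g xi eta H layer Hl K t j $ i - eta t * g (psgd w0 g xi eta H layer Hl K t j) (xi t j) $ i)
        = (\<Sum>j=1..K. psgd w0 g xi' eta H layer Hl K t j $ i - eta t * g (psgd w0 g xi' eta H layer Hl K t j) (xi' t j) $ i)" for i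
    using IH by (intro sum.cong) auto
  show ?case
    using IH Suc.prems(1) by (simp only: psgd.simps S)
qed

lemma sum_dev_le:
  fixes a :: "'k \<Rightarrow> real"
  assumes "finite A"
  shows "(\<Sum>k\<in>A. (a k - (\<Sum>j\<in>A. a j) / real (card A))\<^sup>2) \<le> (\<Sum>k\<in>A. (a k)\<^sup>2)"
proof (cases "A = {}")
  case True then show ?thesis by simp
next
  case False
  define n where "n = real (card A)"
  define m where "m = (\<Sum>j\<in>A. a j) / n"
  have n: "n > 0" using False assms by (simp add: n_def card_gt_0_iff)
  have sm: "(\<Sum>j\<in>A. a j) = n * m" using n by (simp add: m_def)
  have "(\<Sum>k\<in>A. (a k - m)\<^sup>2) = (\<Sum>k\<in>A. (a k)\<^sup>2 - (2 * m) * a k + m\<^sup>2)"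
    by (rule sum.cong) (simp_all add: power2_diff algebra_simps)
  also have "\<dots> = (\<Sum>k\<in>A. (a k)\<^sup>2) - 2 * m * (\<Sum>k\<in>A. a k) + n * m\<^sup>2"
    by (simp add: sum_subtractf sum.distrib sum_distrib_left n_def)
  also have "\<dots> = (\<Sum>k\<in>A. (a k)\<^sup>2) - n * m\<^sup>2" by (simp add: sm power2_eq_square)
  also have "\<dots> \<le> (\<Sum>k\<in>A. (a k)\<^sup>2)" using n by simp
  finally show ?thesis by (simp add: m_def n_def)
qed

lemma exists_sync_point:
  fixes t H c :: nat
  assumes H: "H \<ge> 1"
  shows "\<exists>m. m \<le> t \<and> t < m + H \<and> (m = 0 \<or> m mod H = c mod H)"
proof (cases "t < H")
  case True then show ?thesis by (intro exI[of _ 0]) auto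
next
  case False
  define \<rho> where "\<rho> = c mod H"
  define q where "q = t div H"
  have t: "t = q * H + t mod H" by (simp add: q_def)
  have \<rho>H: "\<rho> < H" using H by (simp add: \<rho>_def)
  have tmH: "t mod H < H" using H by simp
  have q1: "q \<ge> 1" using div_le_mono[of H t H] False H unfolding q_def by simp
  show ?thesis
  proof (cases "\<rho> \<le> t mod H")
    case True
    have "(q * H + \<rho>) mod H = \<rho>" using \<rho>H by simp
    then show ?thesis using True t tmH
      by (intro exI[of _ "q * H + \<rho>"]) (auto simp: \<rho>_def)
  next
    case False
    have "((q - 1) * H + \<rho>) mod H = \<rho>" using \<rho>H by simp
    moreover have "(q - 1) * H + \<rho> \<le> t"
    proof -
      have "(q - 1) * H + \<rho> = q * H - H + \<rho>" using q1 by (simp add: diff_mult_distrib)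
      moreover have "H \<le> q * H" using q1 by simp
      ultimately show ?thesis using t \<rho>H False by linarith
    qed
    moreover have "t < (q - 1) * H + \<rho> + H"
    proof -
      have "(q - 1) * H + H = q * H" using q1 by (cases q) auto
      then show ?thesis using t tmH False by linarith
    qed
    ultimately show ?thesis by (intro exI[of _ "(q - 1) * H + \<rho>"]) (auto simp: \<rho>_def)
  qed
qed

lemma last_sync:
  fixes t H c :: nat
  assumes H: "H \<ge> 1"
  obtains \<tau> where "\<tau> \<le> t" "t < \<tau> + H" "\<tau> = 0 \<or> \<tau> mod H = c mod H"
    "\<And>s. \<tau> \<le> s \<Longrightarrow> s < t \<Longrightarrow> Suc s mod H \<noteq> c mod H"
proof -
  define S where "S = {\<tau>. \<tau> \<le> t \<and> (\<tau> = 0 \<or> \<tau> mod H = c mod H)}"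
  have fin: "finite S" by (simp add: S_def)
  have ne: "0 \<in> S" by (simp add: S_def)
  define \<tau> where "\<tau> = Max S"
  have tS: "\<tau> \<in> S" using fin ne unfolding \<tau>_def by (intro Max_in) auto
  obtain m where m: "m \<le> t" "t < m + H" "m = 0 \<or> m mod H = c mod H"
    using exists_sync_point[OF H] by blast
  have "m \<le> \<tau>" using m fin by (simp add: \<tau>_def S_def)
  moreover have "Suc s mod H \<noteq> c mod H" if "\<tau> \<le> s" "s < t" for s
  proof
    assume "Suc s mod H = c mod H"
    then have "Suc s \<in> S" using that by (simp add: S_def)
    then have "Suc s \<le> \<tau>" using fin by (simp add: \<tau>_def)
    then show False using that by simp
  qed
  ultimately show ?thesis using that tS m by (auto simp: S_def)
qed

lemma norm_sq_vec: "(norm (v :: real^'d))\<^sup>2 = (\<Sum>i\<in>UNIV. (v $ i)\<^sup>2)"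
  unfolding power2_norm_eq_inner by (simp add: inner_vec_def power2_eq_square)

lemma psgd_coord_nosync:
  assumes ns: "\<And>s. \<tau> \<le> s \<Longrightarrow> s < \<tau> + d \<Longrightarrow> Suc s mod H \<noteq> Hl (layer i) mod H"
  shows "psgd w0 g xi eta H layer Hl K (\<tau> + d) k $ i = psgd w0 g xi eta H layer Hl K \<tau> k $ i
     - (\<Sum>s\<in>{\<tau>..<\<tau> + d}. eta s * g (psgd w0 g xi eta H layer Hl K s k) (xi s k) $ i)"
  using ns
proof (induction d)
  case 0 then show ?case by simp
next
  case (Suc d)
  have "Suc (\<tau> + d) mod H \<noteq> Hl (layer i) mod H" using Suc.prems[of "\<tau> + d"] by simp
  then have "psgd w0 g xi eta H layer Hl K (\<tau> + Suc d) k $ i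
      = psgd w0 g xi eta H layer Hl K (\<tau> + d) k $ i - eta (\<tau> + d) * g (psgd w0 g xi eta H layer Hl K (\<tau> + d) k) (xi (\<tau> + d) k) $ i"
    by simp
  also have "psgd w0 g xi eta H layer Hl K (\<tau> + d) k $ i = psgd w0 g xi eta H layer Hl K \<tau> k $ i
     - (\<Sum>s\<in>{\<tau>..<\<tau> + d}. eta s * g (psgd w0 g xi eta H layer Hl K s k) (xi s k) $ i)"
    using Suc.IH Suc.prems by auto
  finally show ?case by simp
qed

lemma psgd_sync_equal:
  assumes "\<tau> = 0 \<or> \<tau> mod H = Hl (layer i) mod H"
  shows "psgd w0 g xi eta H layer Hl K \<tau> k $ i = psgd w0 g xi eta H layer Hl K \<tau> j $ i"
proof (cases \<tau>)
  case 0 then show ?thesis by simp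
next
  case (Suc r)
  then have "Suc r mod H = Hl (layer i) mod H" using assms by simp
  then show ?thesis using Suc by simp
qed

lemma deviation:
  fixes w0 :: "real^'d" and g :: "real^'d \<Rightarrow> 'b \<Rightarrow> real^'d" and xi :: "nat \<Rightarrow> nat \<Rightarrow> 'b"
    and eta :: "nat \<Rightarrow> real" and H K :: nat and layer :: "'d \<Rightarrow> nat" and Hl :: "nat \<Rightarrow> nat"
  assumes H: "H \<ge> 1" and K: "K \<ge> 1"
  defines "P \<equiv> psgd w0 g xi eta H layer Hl K"
  defines "G \<equiv> (\<lambda>s k. g (P s k) (xi s k))"
  shows "(\<Sum>k=1..K. (norm ((1 / real K) *\<^sub>R (\<Sum>j=1..K. P t j) - P t k))\<^sup>2)
     \<le> real H * (\<Sum>s\<in>{s. s < t \<and> t < s + H}. (eta s)\<^sup>2 * (\<Sum>k=1..K. (norm (G s k))\<^sup>2))"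
proof -
  define xb where "xb = (1 / real K) *\<^sub>R (\<Sum>j=1..K. P t j)"
  define W where "W = {s. s < t \<and> t < s + H}"
  have finW: "finite W" by (simp add: W_def)
  have coord: "(\<Sum>k=1..K. ((xb - P t k) $ i)\<^sup>2) \<le> real H * (\<Sum>s\<in>W. (eta s)\<^sup>2 * (\<Sum>k=1..K. (G s k $ i)\<^sup>2))" for i
  proof -
    obtain \<tau> where \<tau>: "\<tau> \<le> t" "t < \<tau> + H" "\<tau> = 0 \<or> \<tau> mod H = Hl (layer i) mod H"
      "\<And>s. \<tau> \<le> s \<Longrightarrow> s < t \<Longrightarrow> Suc s mod H \<noteq> Hl (layer i) mod H"
      using last_sync[OF H, of t "Hl (layer i)"] by blast
    define c where "c = P \<tau> 1 $ i"
    define a where "a k = (\<Sum>s\<in>{\<tau>..<t}. eta s * G s k $ i)" for k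
    have td: "t = \<tau> + (t - \<tau>)" using \<tau>(1) by simp
    have Pt: "P t k $ i = c - a k" for k
    proof -
      have "P (\<tau> + (t - \<tau>)) k $ i = P \<tau> k $ i - (\<Sum>s\<in>{\<tau>..<\<tau> + (t - \<tau>)}. eta s * G s k $ i)"
        unfolding P_def G_def by (rule psgd_coord_nosync) (use \<tau>(4) td in auto)
      moreover have "P \<tau> k $ i = c" unfolding c_def P_def by (rule psgd_sync_equal[where layer=layer and Hl=Hl and H=H, OF \<tau>(3)])
      ultimately show ?thesis using td by (simp add: a_def)
    qed
    have xbi: "xb $ i = c - (\<Sum>j=1..K. a j) / real K"
      using K by (simp add: xb_def Pt sum_subtractf field_simps)
    have "(\<Sum>k=1..K. ((xb - P t k) $ i)\<^sup>2) = (\<Sum>k=1..K. (a k - (\<Sum>j=1..K. a j) / real (card {1..K}))\<^sup>2)"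
      by (rule sum.cong) (simp_all add: xbi Pt power2_commute)
    also have "\<dots> \<le> (\<Sum>k=1..K. (a k)\<^sup>2)" by (rule sum_dev_le) simp
    also have "\<dots> \<le> (\<Sum>k=1..K. real H * (\<Sum>s\<in>W. (eta s)\<^sup>2 * (G s k $ i)\<^sup>2))"
    proof (rule sum_mono)
      fix k
      have "(a k)\<^sup>2 \<le> (\<Sum>s\<in>{\<tau>..<t}. (eta s * G s k $ i)\<^sup>2) * card {\<tau>..<t}"
        unfolding a_def by (rule sum_squared_le_sum_of_squares)
      also have "\<dots> \<le> (\<Sum>s\<in>W. (eta s * G s k $ i)\<^sup>2) * real H"
      proof (rule mult_mono)
        show "(\<Sum>s\<in>{\<tau>..<t}. (eta s * G s k $ i)\<^sup>2) \<le> (\<Sum>s\<in>W. (eta s * G s k $ i)\<^sup>2)"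
          by (rule sum_mono2[OF finW]) (use \<tau>(2) in \<open>auto simp: W_def\<close>)
        show "real (card {\<tau>..<t}) \<le> real H" using \<tau>(2) by simp
      qed (auto simp: sum_nonneg)
      finally show "(a k)\<^sup>2 \<le> real H * (\<Sum>s\<in>W. (eta s)\<^sup>2 * (G s k $ i)\<^sup>2)"
        by (simp add: power_mult_distrib mult.commute)
    qed
    also have "\<dots> = real H * (\<Sum>s\<in>W. (eta s)\<^sup>2 * (\<Sum>k=1..K. (G s k $ i)\<^sup>2))"
      by (simp add: sum_distrib_left[symmetric] sum.swap[of _ W])
    finally show ?thesis .
  qed
  have "(\<Sum>k=1..K. (norm (xb - P t k))\<^sup>2) = (\<Sum>i\<in>UNIV. \<Sum>k=1..K. ((xb - P t k) $ i)\<^sup>2)"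
    by (simp add: norm_sq_vec sum.swap[of _ UNIV])
  also have "\<dots> \<le> (\<Sum>i\<in>UNIV. real H * (\<Sum>s\<in>W. (eta s)\<^sup>2 * (\<Sum>k=1..K. (G s k $ i)\<^sup>2)))"
    by (rule sum_mono[OF coord])
  also have "\<dots> = real H * (\<Sum>s\<in>W. (eta s)\<^sup>2 * (\<Sum>k=1..K. (norm (G s k))\<^sup>2))"
    by (simp add: norm_sq_vec sum_distrib_left sum.swap[of _ UNIV])
  finally show ?thesis by (simp add: xb_def W_def)
qed

lemma borel_measurable_vec_component[measurable (raw)]:
  fixes F :: "'a \<Rightarrow> real^'d"
  assumes "F \<in> borel_measurable M"
  shows "(\<lambda>x. F x $ i) \<in> borel_measurable M"
proof -
  have "(\<lambda>x. F x \<bullet> axis i 1) \<in> borel_measurable M" using assms by measurable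
  then show ?thesis by (simp add: inner_axis)
qed

lemma borel_measurable_vecI:
  fixes F :: "'a \<Rightarrow> real^'d"
  assumes "\<And>i. (\<lambda>x. F x $ i) \<in> borel_measurable M"
  shows "F \<in> borel_measurable M"
proof (subst borel_measurable_euclidean_space, intro ballI)
  fix b :: "real^'d" assume "b \<in> Basis"
  then obtain i where b: "b = axis i 1" by (auto simp: Basis_vec_def)
  show "(\<lambda>x. F x \<bullet> b) \<in> borel_measurable M" using assms[of i] by (simp add: b inner_axis)
qed

lemma psgd_measurable:
  fixes w0 :: "real^'d" and g :: "real^'d \<Rightarrow> 'b \<Rightarrow> real^'d" and xi :: "nat \<Rightarrow> nat \<Rightarrow> 'a \<Rightarrow> 'b"
  assumes gm: "(\<lambda>(v, x). g v x) \<in> borel_measurable (borel \<Otimes>\<^sub>M N)"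
    and xm: "\<And>r j. r < t \<Longrightarrow> j \<in> {1..K} \<Longrightarrow> xi r j \<in> measurable Om N"
  shows "k \<in> {1..K} \<Longrightarrow> (\<lambda>\<omega>. psgd w0 g (\<lambda>r j. xi r j \<omega>) eta H layer Hl K t k) \<in> borel_measurable Om"
  using xm
proof (induction t arbitrary: k)
  case 0 then show ?case by simp
next
  case (Suc t)
  have P: "(\<lambda>\<omega>. psgd w0 g (\<lambda>r j. xi r j \<omega>) eta H layer Hl K t j) \<in> borel_measurable Om" if "j \<in> {1..K}" for j
    using Suc.IH[OF that] Suc.prems(2) by auto
  have X: "xi t j \<in> measurable Om N" if "j \<in> {1..K}" for j using Suc.prems(2) that by auto
  have GG: "(\<lambda>\<omega>. g (psgd w0 g (\<lambda>r j. xi r j \<omega>) eta H layer Hl K t j) (xi t j \<omega>)) \<in> borel_measurable Om"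
    if "j \<in> {1..K}" for j
    by (rule measurable_Pair_compose_split[OF gm P[OF that] X[OF that]])
  show ?case
  proof (rule borel_measurable_vecI)
    fix i
    show "(\<lambda>\<omega>. psgd w0 g (\<lambda>r j. xi r j \<omega>) eta H layer Hl K (Suc t) k $ i) \<in> borel_measurable Om"
    proof (cases "Suc t mod H = Hl (layer i) mod H")
      case True
      have "(\<lambda>\<omega>. (\<Sum>j=1..K. psgd w0 g (\<lambda>r j. xi r j \<omega>) eta H layer Hl K t j $ i
              - eta t * g (psgd w0 g (\<lambda>r j. xi r j \<omega>) eta H layer Hl K t j) (xi t j \<omega>) $ i) / real K)
            \<in> borel_measurable Om"
        using P GG by (intro borel_measurable_divide borel_measurable_sum borel_measurable_diff
            borel_measurable_times borel_measurable_const borel_measurable_vec_component) auto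
      then show ?thesis using True by simp
    next
      case False
      have "(\<lambda>\<omega>. psgd w0 g (\<lambda>r j. xi r j \<omega>) eta H layer Hl K t k $ i
              - eta t * g (psgd w0 g (\<lambda>r j. xi r j \<omega>) eta H layer Hl K t k) (xi t k \<omega>) $ i)
            \<in> borel_measurable Om"
        using P[OF Suc.prems(1)] GG[OF Suc.prems(1)] by (intro borel_measurable_diff
            borel_measurable_times borel_measurable_const borel_measurable_vec_component) auto
      then show ?thesis using False by simp
    qed
  qed
qed

lemma nn_integral_norm_shift:
  fixes D :: "'b \<Rightarrow> real^'d"
  assumes P: "prob_space P" and Dm: "D \<in> borel_measurable P" and Di: "integrable P D"
    and D0: "(\<integral>y. D y \<partial>P) = 0"
    and Dfin: "(\<integral>\<^sup>+y. ennreal ((norm (D y))\<^sup>2) \<partial>P) < \<infinity>"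
  shows "(\<integral>\<^sup>+y. ennreal ((norm (s + c *\<^sub>R D y))\<^sup>2) \<partial>P)
       = ennreal ((norm s)\<^sup>2) + ennreal (c\<^sup>2) * (\<integral>\<^sup>+y. ennreal ((norm (D y))\<^sup>2) \<partial>P)"
proof -
  interpret prob_space P by (rule P)
  obtain r where r: "(\<integral>\<^sup>+y. ennreal ((norm (D y))\<^sup>2) \<partial>P) = ennreal r"
    using Dfin by (cases "(\<integral>\<^sup>+y. ennreal ((norm (D y))\<^sup>2) \<partial>P)" rule: ennreal_cases) auto
  have m2: "(\<lambda>y. (norm (D y))\<^sup>2) \<in> borel_measurable P" using Dm by measurable
  have int2: "integrable P (\<lambda>y. (norm (D y))\<^sup>2)"
    by (rule integrableI_nn_integral_finite[OF m2 _ r]) simp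
  have e1: "(\<integral>\<^sup>+y. ennreal ((norm (D y))\<^sup>2) \<partial>P) = ennreal (\<integral>y. (norm (D y))\<^sup>2 \<partial>P)"
    by (rule nn_integral_eq_integral[OF int2]) simp
  have expand: "(norm (s + c *\<^sub>R D y))\<^sup>2 = (norm s)\<^sup>2 + 2 * c * (s \<bullet> D y) + c\<^sup>2 * (norm (D y))\<^sup>2" for y
    unfolding power2_norm_eq_inner
    by (simp add: inner_add_left inner_add_right algebra_simps power2_eq_square inner_commute)
  have i1: "integrable P (\<lambda>y. 2 * c * (s \<bullet> D y))"
    by (rule integrable_mult_right[OF integrable_inner_right[OF Di]])
  have i2: "integrable P (\<lambda>y. c\<^sup>2 * (norm (D y))\<^sup>2)"
    by (rule integrable_mult_right[OF int2])
  have i0: "integrable P (\<lambda>y. (norm s)\<^sup>2)" by (rule integrable_const)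
  have intI: "integrable P (\<lambda>y. (norm s)\<^sup>2 + 2 * c * (s \<bullet> D y) + c\<^sup>2 * (norm (D y))\<^sup>2)"
    by (intro Bochner_Integration.integrable_add i0 i1 i2)
  have iv: "(\<integral>y. (norm s)\<^sup>2 + 2 * c * (s \<bullet> D y) + c\<^sup>2 * (norm (D y))\<^sup>2 \<partial>P)
       = (\<integral>y. (norm s)\<^sup>2 \<partial>P) + (\<integral>y. 2 * c * (s \<bullet> D y) \<partial>P) + (\<integral>y. c\<^sup>2 * (norm (D y))\<^sup>2 \<partial>P)"
    by (simp only: Bochner_Integration.integral_add[OF Bochner_Integration.integrable_add[OF i0 i1] i2]
                   Bochner_Integration.integral_add[OF i0 i1])
  have iv0: "(\<integral>y. (norm s)\<^sup>2 \<partial>P) = (norm s)\<^sup>2"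
    by (simp only: lebesgue_integral_const prob_space scaleR_one)
  have iv1: "(\<integral>y. 2 * c * (s \<bullet> D y) \<partial>P) = 0"
    by (simp only: integral_mult_right_zero integral_inner_right[OF Di] D0 inner_zero_right mult_zero_right)
  have iv2: "(\<integral>y. c\<^sup>2 * (norm (D y))\<^sup>2 \<partial>P) = c\<^sup>2 * (\<integral>y. (norm (D y))\<^sup>2 \<partial>P)"
    by (rule integral_mult_right_zero)
  have "(\<integral>\<^sup>+y. ennreal ((norm (s + c *\<^sub>R D y))\<^sup>2) \<partial>P)
      = (\<integral>\<^sup>+y. ennreal ((norm s)\<^sup>2 + 2 * c * (s \<bullet> D y) + c\<^sup>2 * (norm (D y))\<^sup>2) \<partial>P)"
    by (simp only: expand)
  also have "\<dots> = ennreal (\<integral>y. (norm s)\<^sup>2 + 2 * c * (s \<bullet> D y) + c\<^sup>2 * (norm (D y))\<^sup>2 \<partial>P)"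
    by (rule nn_integral_eq_integral[OF intI]) (simp add: expand[symmetric])
  also have "\<dots> = ennreal ((norm s)\<^sup>2 + c\<^sup>2 * (\<integral>y. (norm (D y))\<^sup>2 \<partial>P))"
    by (simp only: iv iv0 iv1 iv2 add_0_right)
  also have "\<dots> = ennreal ((norm s)\<^sup>2) + ennreal (c\<^sup>2) * ennreal (\<integral>y. (norm (D y))\<^sup>2 \<partial>P)"
  proof -
    have nn: "0 \<le> (\<integral>y. (norm (D y))\<^sup>2 \<partial>P)" by (rule integral_nonneg_AE) simp
    have "ennreal ((norm s)\<^sup>2 + c\<^sup>2 * (\<integral>y. (norm (D y))\<^sup>2 \<partial>P)) = ennreal ((norm s)\<^sup>2) + ennreal (c\<^sup>2 * (\<integral>y. (norm (D y))\<^sup>2 \<partial>P))"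
      by (rule ennreal_plus) (use nn in auto)
    also have "ennreal (c\<^sup>2 * (\<integral>y. (norm (D y))\<^sup>2 \<partial>P)) = ennreal (c\<^sup>2) * ennreal (\<integral>y. (norm (D y))\<^sup>2 \<partial>P)"
      by (rule ennreal_mult) (use nn in auto)
    finally show ?thesis .
  qed
  finally show ?thesis by (simp only: e1)
qed

lemma meas_PiM_sum:
  fixes D :: "'i \<Rightarrow> 'b \<Rightarrow> real^'d"
  assumes "A \<subseteq> A'" "\<And>i. i \<in> A \<Longrightarrow> D i \<in> borel_measurable (Q i)"
  shows "(\<lambda>x. ennreal ((norm (B + c *\<^sub>R (\<Sum>i\<in>A. D i (x i))))\<^sup>2)) \<in> borel_measurable (PiM A' Q)"
proof -
  have "(\<lambda>x. D i (x i)) \<in> borel_measurable (PiM A' Q)" if "i \<in> A" for i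
    using assms that by (intro measurable_compose[OF measurable_component_singleton]) auto
  then have "(\<lambda>x. (\<Sum>i\<in>A. D i (x i))) \<in> borel_measurable (PiM A' Q)"
    by (rule borel_measurable_sum)
  then show ?thesis by measurable
qed

lemma nn_integral_PiM_sum_shift:
  fixes D :: "'i \<Rightarrow> 'b \<Rightarrow> real^'d" and Q :: "'i \<Rightarrow> 'b measure"
  assumes Q: "\<And>i. prob_space (Q i)" and fin: "finite A"
    and Dm: "\<And>i. i \<in> A \<Longrightarrow> D i \<in> borel_measurable (Q i)"
    and Di: "\<And>i. i \<in> A \<Longrightarrow> integrable (Q i) (D i)"
    and D0: "\<And>i. i \<in> A \<Longrightarrow> (\<integral>y. D i y \<partial>Q i) = 0"
    and Dfin: "\<And>i. i \<in> A \<Longrightarrow> (\<integral>\<^sup>+y. ennreal ((norm (D i y))\<^sup>2) \<partial>Q i) < \<infinity>"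
  shows "(\<integral>\<^sup>+x. ennreal ((norm (B + c *\<^sub>R (\<Sum>i\<in>A. D i (x i))))\<^sup>2) \<partial>PiM A Q)
       = ennreal ((norm B)\<^sup>2) + ennreal (c\<^sup>2) * (\<Sum>i\<in>A. \<integral>\<^sup>+y. ennreal ((norm (D i y))\<^sup>2) \<partial>Q i)"
  using fin Dm Di D0 Dfin
proof (induction A arbitrary: B rule: finite_induct)
  case empty
  interpret prob_space "PiM {} Q" by (rule prob_space_PiM) (rule Q)
  show ?case by (simp add: emeasure_space_1)
next
  case (insert a A)
  interpret product_sigma_finite Q
    by (simp add: product_sigma_finite_def Q prob_space_imp_sigma_finite)
  interpret PA: prob_space "PiM A Q" by (rule prob_space_PiM) (rule Q)
  define S where "S x = B + c *\<^sub>R (\<Sum>i\<in>A. D i (x i))" for x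
  have mF: "(\<lambda>x. ennreal ((norm (B + c *\<^sub>R (\<Sum>i\<in>insert a A. D i (x i))))\<^sup>2)) \<in> borel_measurable (PiM (insert a A) Q)"
    by (rule meas_PiM_sum) (use insert.prems in auto)
  have mS: "(\<lambda>x. ennreal ((norm (S x))\<^sup>2)) \<in> borel_measurable (PiM A Q)"
    unfolding S_def by (rule meas_PiM_sum) (use insert.prems in auto)
  have upd: "B + c *\<^sub>R (\<Sum>i\<in>insert a A. D i ((x(a := y)) i)) = S x + c *\<^sub>R D a y" for x y
  proof -
    have "(\<Sum>i\<in>A. D i ((x(a := y)) i)) = (\<Sum>i\<in>A. D i (x i))"
      using insert.hyps by (intro sum.cong) auto
    then show ?thesis using insert.hyps by (simp add: S_def algebra_simps)
  qed
  have "(\<integral>\<^sup>+x. ennreal ((norm (B + c *\<^sub>R (\<Sum>i\<in>insert a A. D i (x i))))\<^sup>2) \<partial>PiM (insert a A) Q)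
      = (\<integral>\<^sup>+x. (\<integral>\<^sup>+y. ennreal ((norm (S x + c *\<^sub>R D a y))\<^sup>2) \<partial>Q a) \<partial>PiM A Q)"
    by (simp only: product_nn_integral_insert[OF insert.hyps(1,2) mF] upd)
  also have "\<dots> = (\<integral>\<^sup>+x. ennreal ((norm (S x))\<^sup>2) + ennreal (c\<^sup>2) * (\<integral>\<^sup>+y. ennreal ((norm (D a y))\<^sup>2) \<partial>Q a) \<partial>PiM A Q)"
    by (intro nn_integral_cong nn_integral_norm_shift Q) (use insert.prems in auto)
  also have "\<dots> = (\<integral>\<^sup>+x. ennreal ((norm (S x))\<^sup>2) \<partial>PiM A Q) + ennreal (c\<^sup>2) * (\<integral>\<^sup>+y. ennreal ((norm (D a y))\<^sup>2) \<partial>Q a)"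
    by (subst nn_integral_add) (auto simp: mS PA.emeasure_space_1)
  also have "(\<integral>\<^sup>+x. ennreal ((norm (S x))\<^sup>2) \<partial>PiM A Q)
      = ennreal ((norm B)\<^sup>2) + ennreal (c\<^sup>2) * (\<Sum>i\<in>A. \<integral>\<^sup>+y. ennreal ((norm (D i y))\<^sup>2) \<partial>Q i)"
    unfolding S_def by (rule insert.IH) (use insert.prems in auto)
  finally show ?case
    using insert.hyps by (simp add: distrib_left add.assoc add.commute)
qed

lemma indep_split:
  fixes X :: "'i \<Rightarrow> 'o \<Rightarrow> 'b" and Q :: "'i \<Rightarrow> 'b measure"
    and h :: "('i \<Rightarrow> 'b) \<Rightarrow> ('i \<Rightarrow> 'b) \<Rightarrow> ennreal"
  assumes M: "prob_space M" and ind: "prob_space.indep_vars M (\<lambda>_. N) X I"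
    and JI: "J \<subseteq> I" and TI: "T \<subseteq> I" and JT: "J \<inter> T = {}" and fJ: "finite J" and fT: "finite T"
    and Tne: "T \<noteq> {}"
    and Q: "\<And>i. prob_space (Q i)" and QX: "\<And>i. i \<in> I \<Longrightarrow> Q i = distr M N (X i)"
    and hm: "case_prod h \<in> borel_measurable (PiM J (\<lambda>_. N) \<Otimes>\<^sub>M PiM T (\<lambda>_. N))"
  shows "(\<integral>\<^sup>+\<omega>. h (\<lambda>i\<in>J. X i \<omega>) (\<lambda>i\<in>T. X i \<omega>) \<partial>M)
       = (\<integral>\<^sup>+\<omega>. (\<integral>\<^sup>+x. h (\<lambda>i\<in>J. X i \<omega>) x \<partial>PiM T Q) \<partial>M)"
proof -
  interpret prob_space M by (rule M)
  interpret PS: product_sigma_finite Q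
    by (simp add: product_sigma_finite_def Q prob_space_imp_sigma_finite)
  interpret PT: sigma_finite_measure "PiM T Q"
    using Q by (intro prob_space_imp_sigma_finite prob_space_PiM) auto
  have rv: "random_variable N (X i)" if "i \<in> I" for i
    using ind that by (auto simp: indep_vars_def)
  have setsQ: "sets (Q i) = sets N" if "i \<in> I" for i using QX[OF that] by simp
  have setsP: "sets (PiM L Q) = sets (PiM L (\<lambda>_. N))" if "L \<subseteq> I" for L
    using that setsQ by (intro sets_PiM_cong) auto
  have deq: "distr M (PiM L (\<lambda>_. N)) (\<lambda>\<omega>. \<lambda>i\<in>L. X i \<omega>) = PiM L Q" if "L \<subseteq> I" "L \<noteq> {}" for L
  proof -
    have "indep_vars (\<lambda>_. N) X L" using indep_vars_subset[OF ind that(1)] .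
    then have "distr M (PiM L (\<lambda>_. N)) (\<lambda>\<omega>. \<lambda>i\<in>L. X i \<omega>) = PiM L (\<lambda>i. distr M N (X i))"
      using indep_vars_iff_distr_eq_PiM'[where I=L and M'="\<lambda>_. N" and X=X] that rv by auto
    also have "\<dots> = PiM L Q" using that QX by (intro PiM_cong) auto
    finally show ?thesis .
  qed
  define L where "L = J \<union> T"
  have LI: "L \<subseteq> I" and Lne: "L \<noteq> {}" using JI TI Tne by (auto simp: L_def)
  define F where "F z = h (restrict z J) (restrict z T)" for z
  have Fm: "F \<in> borel_measurable (PiM L (\<lambda>_. N))"
    unfolding F_def
    by (rule measurable_Pair_compose_split[OF hm measurable_restrict_subset measurable_restrict_subset])
       (auto simp: L_def)
  have Xm: "(\<lambda>\<omega>. \<lambda>i\<in>L. X i \<omega>) \<in> measurable M (PiM L (\<lambda>_. N))"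
    using rv LI by (intro measurable_restrict) auto
  have "(\<integral>\<^sup>+\<omega>. h (\<lambda>i\<in>J. X i \<omega>) (\<lambda>i\<in>T. X i \<omega>) \<partial>M) = (\<integral>\<^sup>+\<omega>. F (\<lambda>i\<in>L. X i \<omega>) \<partial>M)"
  proof -
    have "J \<inter> L = J" "T \<inter> L = T" by (auto simp: L_def)
    then show ?thesis by (simp add: F_def Int_commute)
  qed
  also have "\<dots> = (\<integral>\<^sup>+z. F z \<partial>distr M (PiM L (\<lambda>_. N)) (\<lambda>\<omega>. \<lambda>i\<in>L. X i \<omega>))"
    by (rule nn_integral_distr[symmetric, OF Xm]) (simp add: Fm)
  also have "\<dots> = (\<integral>\<^sup>+z. F z \<partial>PiM L Q)" by (simp add: deq[OF LI Lne])
  also have "\<dots> = (\<integral>\<^sup>+y. (\<integral>\<^sup>+x. F (merge J T (y, x)) \<partial>PiM T Q) \<partial>PiM J Q)"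
    unfolding L_def
  proof (rule PS.product_nn_integral_fold[OF JT fJ fT])
    show "F \<in> borel_measurable (PiM (J \<union> T) Q)"
      using Fm measurable_cong_sets[OF setsP[OF LI] refl, of borel] by (metis L_def)
  qed
  also have "\<dots> = (\<integral>\<^sup>+y. (\<integral>\<^sup>+x. h y x \<partial>PiM T Q) \<partial>PiM J Q)"
  proof (intro nn_integral_cong)
    fix y x assume y: "y \<in> space (PiM J Q)" and x: "x \<in> space (PiM T Q)"
    have "restrict (merge J T (y, x)) J = y"
      using y JT by (auto simp: space_PiM PiE_def extensional_def restrict_def fun_eq_iff)
    moreover have "restrict (merge J T (y, x)) T = x"
      using x JT by (auto simp: space_PiM PiE_def extensional_def restrict_def fun_eq_iff merge_def)
    ultimately show "F (merge J T (y, x)) = h y x" by (simp add: F_def)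
  qed
  also have "\<dots> = (\<integral>\<^sup>+\<omega>. (\<integral>\<^sup>+x. h (\<lambda>i\<in>J. X i \<omega>) x \<partial>PiM T Q) \<partial>M)"
  proof (cases "J = {}")
    case True
    have r: "(\<lambda>i\<in>{}. X i \<omega>) = (\<lambda>_. undefined)" for \<omega> by (simp add: restrict_def)
    show ?thesis using True by (simp add: PiM_empty emeasure_space_1 nn_integral_count_space_finite r)
  next
    case False
    have Gm: "(\<lambda>y. \<integral>\<^sup>+x. h y x \<partial>PiM T Q) \<in> borel_measurable (PiM J (\<lambda>_. N))"
    proof (rule PT.borel_measurable_nn_integral)
      show "case_prod h \<in> borel_measurable (PiM J (\<lambda>_. N) \<Otimes>\<^sub>M PiM T Q)"
        using hm measurable_cong_sets[OF sets_pair_measure_cong[OF refl setsP[OF TI]] refl, of "PiM J (\<lambda>_. N)" borel] by metis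
    qed
    have XJ: "(\<lambda>\<omega>. \<lambda>i\<in>J. X i \<omega>) \<in> measurable M (PiM J (\<lambda>_. N))"
      using rv JI by (intro measurable_restrict) auto
    have "(\<integral>\<^sup>+y. (\<integral>\<^sup>+x. h y x \<partial>PiM T Q) \<partial>PiM J Q)
        = (\<integral>\<^sup>+y. (\<integral>\<^sup>+x. h y x \<partial>PiM T Q) \<partial>distr M (PiM J (\<lambda>_. N)) (\<lambda>\<omega>. \<lambda>i\<in>J. X i \<omega>))"
      by (simp add: deq[OF JI False])
    also have "\<dots> = (\<integral>\<^sup>+\<omega>. (\<integral>\<^sup>+x. h (\<lambda>i\<in>J. X i \<omega>) x \<partial>PiM T Q) \<partial>M)"
      by (rule nn_integral_distr[OF XJ]) (simp add: Gm)
    finally show ?thesis .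
  qed
  finally show ?thesis .
qed

lemma ennreal_lin1:
  fixes x e y :: real
  assumes "0 \<le> x" "0 \<le> e" "0 \<le> y"
  shows "ennreal x + ennreal e * ennreal y = ennreal (x + e * y)"
  using assms by (simp add: ennreal_mult ennreal_plus)

lemma ennreal_lin2:
  fixes x e y c :: real
  assumes "0 \<le> x" "0 \<le> e" "0 \<le> y" "0 \<le> c"
  shows "ennreal c * ennreal x + ennreal e * ennreal y = ennreal (c * x + e * y)"
  using assms by (simp add: ennreal_mult ennreal_plus)

lemma PiM_component_nn_integral:
  assumes Q: "\<And>i. i \<in> T \<Longrightarrow> prob_space (Q i)" and i: "i \<in> T" and phi: "\<phi> \<in> borel_measurable (Q i)"
  shows "(\<integral>\<^sup>+x. \<phi> (x i) \<partial>PiM T Q) = (\<integral>\<^sup>+z. \<phi> z \<partial>Q i)"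
proof -
  have "(\<integral>\<^sup>+z. \<phi> z \<partial>Q i) = (\<integral>\<^sup>+z. \<phi> z \<partial>distr (PiM T Q) (Q i) (\<lambda>x. x i))"
  proof -
    have "distr (PiM T Q) (Q i) (\<lambda>x. x i) = Q i" by (rule distr_PiM_component) (use Q i in auto)
    then show ?thesis by simp
  qed
  also have "\<dots> = (\<integral>\<^sup>+x. \<phi> (x i) \<partial>PiM T Q)"
    by (rule nn_integral_distr) (use i phi in auto)
  finally show ?thesis by simp
qed

context
  fixes M :: "'o measure" and N :: "'b measure"
    and f :: "real^'d \<Rightarrow> real" and grad :: "real^'d \<Rightarrow> real^'d"
    and g :: "real^'d \<Rightarrow> 'b \<Rightarrow> real^'d"
    and \<xi> :: "nat \<Rightarrow> nat \<Rightarrow> 'o \<Rightarrow> 'b"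
    and w0 wstar :: "real^'d"
    and \<beta> \<mu> a \<sigma> G :: real
    and K H :: nat
    and layer :: "'d \<Rightarrow> nat" and Hl :: "nat \<Rightarrow> nat"
  assumes M: "prob_space M"
    and smooth: "smooth_with_grad f grad \<beta>"
    and sconv: "strongly_convex f \<mu>"
    and minimizer: "\<forall>v. f wstar \<le> f v"
    and K: "K \<ge> 1" and H: "H \<ge> 1"
    and a: "a > max (16 * (\<beta> / \<mu>)) (real H)"
    and g_meas: "(\<lambda>(v, x). g v x) \<in> borel_measurable (borel \<Otimes>\<^sub>M N)"
    and xi_meas: "\<forall>r k. \<xi> r k \<in> measurable M N"
    and xi_indep: "prob_space.indep_vars M (\<lambda>_. N) (\<lambda>(r, k). \<xi> r k) (UNIV \<times> {1..K})"
    and unbiased: "\<forall>r k v. integrable (distr M N (\<xi> r k)) (g v)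
                     \<and> (\<integral>x. g v x \<partial>distr M N (\<xi> r k)) = grad v"
begin

abbreviation "eta r \<equiv> 4 / (\<mu> * (a + real r))"
abbreviation "ww r k \<omega> \<equiv> psgd w0 g (\<lambda>r k. \<xi> r k \<omega>) (\<lambda>r. 4 / (\<mu> * (a + real r))) H layer Hl K r k"
abbreviation "wy r k y \<equiv> psgd w0 g (\<lambda>r k. y (r, k)) (\<lambda>r. 4 / (\<mu> * (a + real r))) H layer Hl K r k"
abbreviation "XX \<equiv> (\<lambda>(r, k). \<xi> r k)"
abbreviation "QQ i \<equiv> distr M N (XX i)"

lemma mu_pos: "\<mu> > 0" using sconv by (simp add: strongly_convex_def)
lemma beta_ge: "\<beta> \<ge> \<mu>" by (rule mu_le_beta[OF smooth sconv])
lemma beta_pos: "\<beta> > 0" using mu_pos beta_ge by simp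
lemma a_gt_H: "a > real H" using a by simp
lemma a_ge_16: "a \<ge> 16"
proof -
  have "16 * (\<beta> / \<mu>) \<ge> 16" using beta_ge mu_pos by (simp add: field_simps)
  then show ?thesis using a by simp
qed
lemma a_pos: "a > 0" using a_ge_16 by simp
lemma eta_pos: "eta r > 0" using mu_pos a_pos by simp
lemma eta_le: "eta r \<le> 1 / (4 * \<beta>)"
proof -
  have "16 * \<beta> \<le> \<mu> * a" using a mu_pos by (simp add: field_simps)
  also have "\<dots> \<le> \<mu> * (a + real r)" using mu_pos by simp
  finally have "16 * \<beta> \<le> \<mu> * (a + real r)" .
  then show ?thesis using mu_pos a_pos beta_pos by (simp add: field_simps)
qed
lemma mu_eta_le: "\<mu> * eta r \<le> 1"
proof -
  have "\<mu> * eta r = 4 / (a + real r)" using mu_pos by simp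
  also have "\<dots> \<le> 1" using a_ge_16 by simp
  finally show ?thesis .
qed

lemma QQ_prob: "prob_space (QQ i)"
  using xi_meas by (cases i) (auto intro!: prob_space.prob_space_distr M)

lemma ww_meas: "k \<in> {1..K} \<Longrightarrow> (\<lambda>\<omega>. ww r k \<omega>) \<in> borel_measurable M"
  by (rule psgd_measurable[OF g_meas]) (use xi_meas in auto)

lemma g_comp_meas:
  assumes "F \<in> borel_measurable Om" "Y \<in> measurable Om N"
  shows "(\<lambda>\<omega>. g (F \<omega>) (Y \<omega>)) \<in> borel_measurable Om"
  by (rule measurable_Pair_compose_split[OF g_meas assms])

lemma gk_meas: "k \<in> {1..K} \<Longrightarrow> (\<lambda>\<omega>. g (ww r k \<omega>) (\<xi> r k \<omega>)) \<in> borel_measurable M"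
  using ww_meas xi_meas by (intro g_comp_meas) auto

lemma grad_cont: "continuous_on UNIV grad"
proof -
  have "norm (grad x - grad y) \<le> \<beta> * norm (x - y)" for x y
    using smooth by (simp add: smooth_with_grad_def)
  then show ?thesis
    by (intro lipschitz_on_continuous_on[where L=\<beta>]) (auto simp: lipschitz_on_def dist_norm beta_pos less_imp_le)
qed

lemma grad_meas[measurable]: "grad \<in> borel_measurable borel"
  by (rule borel_measurable_continuous_onI[OF grad_cont])

lemma f_cont: "continuous_on UNIV f"
proof -
  have "\<forall>x\<in>UNIV. isCont f x"
    using smooth by (auto simp: smooth_with_grad_def intro: has_derivative_continuous)
  then show ?thesis by (simp add: continuous_at_imp_continuous_on)
qed

lemma f_meas[measurable]: "f \<in> borel_measurable borel"
  by (rule borel_measurable_continuous_onI[OF f_cont])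

lemma wy_local:
  assumes "k \<in> {1..K}" "J \<supseteq> {..<r} \<times> {1..K}"
  shows "wy r k (\<lambda>i\<in>J. XX i \<omega>) = ww r k \<omega>"
  by (rule psgd_local) (use assms in \<open>auto simp: subset_iff\<close>)

lemma XX_restrict_meas:
  assumes "(r, j) \<in> J"
  shows "(\<lambda>p. fst p (r, j)) \<in> measurable (PiM J (\<lambda>_. N) \<Otimes>\<^sub>M PiM T (\<lambda>_. N)) N"
  using assms by (intro measurable_compose[OF measurable_fst measurable_component_singleton]) auto

lemma wy_fst_meas:
  assumes "k \<in> {1..K}" "{..<r} \<times> {1..K} \<subseteq> J"
  shows "(\<lambda>p. wy r k (fst p)) \<in> borel_measurable (PiM J (\<lambda>_. N) \<Otimes>\<^sub>M PiM T (\<lambda>_. N))"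
  by (rule psgd_measurable[OF g_meas _ assms(1), where xi="\<lambda>r j p. fst p (r, j)"])
     (use assms(2) in \<open>auto intro!: XX_restrict_meas\<close>)

lemma snd_comp_meas:
  assumes "i \<in> T"
  shows "(\<lambda>p. snd p i) \<in> measurable (PiM J (\<lambda>_. N) \<Otimes>\<^sub>M PiM T (\<lambda>_. N)) N"
  using assms by (intro measurable_compose[OF measurable_snd measurable_component_singleton]) auto

lemma indep_split_here:
  fixes h :: "(nat \<times> nat \<Rightarrow> 'b) \<Rightarrow> (nat \<times> nat \<Rightarrow> 'b) \<Rightarrow> ennreal"
  assumes hm: "case_prod h \<in> borel_measurable (PiM ({..<s} \<times> {1..K}) (\<lambda>_. N) \<Otimes>\<^sub>M PiM ({s} \<times> {1..K}) (\<lambda>_. N))"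
  shows "(\<integral>\<^sup>+\<omega>. h (\<lambda>i\<in>{..<s} \<times> {1..K}. XX i \<omega>) (\<lambda>i\<in>{s} \<times> {1..K}. XX i \<omega>) \<partial>M)
       = (\<integral>\<^sup>+\<omega>. (\<integral>\<^sup>+x. h (\<lambda>i\<in>{..<s} \<times> {1..K}. XX i \<omega>) x \<partial>PiM ({s} \<times> {1..K}) QQ) \<partial>M)"
  by (rule indep_split[OF M xi_indep _ _ _ _ _ _ QQ_prob _ hm]) (use K in auto)

lemma gk_second_moment:
  assumes sm: "AE \<omega> in M. (\<integral>\<^sup>+x. ennreal ((norm (g (ww s k \<omega>) x))\<^sup>2) \<partial>distr M N (\<xi> s k)) \<le> ennreal (G\<^sup>2)"
    and k: "k \<in> {1..K}"
  shows "(\<integral>\<^sup>+\<omega>. ennreal ((norm (g (ww s k \<omega>) (\<xi> s k \<omega>)))\<^sup>2) \<partial>M) \<le> ennreal (G\<^sup>2)"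
proof -
  interpret prob_space M by (rule M)
  define J where "J = {..<s} \<times> {1..K}"
  define T where "T = {s} \<times> {1..K}"
  define h where "h y x = ennreal ((norm (g (wy s k y) (x (s, k))))\<^sup>2)" for y x :: "nat \<times> nat \<Rightarrow> 'b"
  have sk: "(s, k) \<in> T" using k by (simp add: T_def)
  have hm: "case_prod h \<in> borel_measurable (PiM J (\<lambda>_. N) \<Otimes>\<^sub>M PiM T (\<lambda>_. N))"
  proof -
    have "(\<lambda>p. g (wy s k (fst p)) (snd p (s, k))) \<in> borel_measurable (PiM J (\<lambda>_. N) \<Otimes>\<^sub>M PiM T (\<lambda>_. N))"
      by (intro g_comp_meas wy_fst_meas snd_comp_meas k sk) (simp add: J_def)
    then have "(\<lambda>p. ennreal ((norm (g (wy s k (fst p)) (snd p (s, k))))\<^sup>2)) \<in> borel_measurable (PiM J (\<lambda>_. N) \<Otimes>\<^sub>M PiM T (\<lambda>_. N))"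
      by measurable
    then show ?thesis by (simp add: h_def case_prod_beta')
  qed
  have W: "wy s k (\<lambda>i\<in>J. XX i \<omega>) = ww s k \<omega>" for \<omega>
    using k by (intro wy_local) (auto simp: J_def)
  have Tk: "(\<lambda>i\<in>T. XX i \<omega>) (s, k) = \<xi> s k \<omega>" for \<omega> using sk by simp
  have "(\<integral>\<^sup>+\<omega>. ennreal ((norm (g (ww s k \<omega>) (\<xi> s k \<omega>)))\<^sup>2) \<partial>M)
      = (\<integral>\<^sup>+\<omega>. h (\<lambda>i\<in>J. XX i \<omega>) (\<lambda>i\<in>T. XX i \<omega>) \<partial>M)"
    by (simp only: h_def W Tk)
  also have "\<dots> = (\<integral>\<^sup>+\<omega>. (\<integral>\<^sup>+x. h (\<lambda>i\<in>J. XX i \<omega>) x \<partial>PiM T QQ) \<partial>M)"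
    unfolding J_def T_def by (rule indep_split_here) (use hm in \<open>simp add: J_def T_def\<close>)
  also have "\<dots> = (\<integral>\<^sup>+\<omega>. (\<integral>\<^sup>+z. ennreal ((norm (g (ww s k \<omega>) z))\<^sup>2) \<partial>distr M N (\<xi> s k)) \<partial>M)"
  proof (rule nn_integral_cong)
    fix \<omega>
    have "(\<integral>\<^sup>+x. h (\<lambda>i\<in>J. XX i \<omega>) x \<partial>PiM T QQ) = (\<integral>\<^sup>+x. ennreal ((norm (g (ww s k \<omega>) (x (s, k))))\<^sup>2) \<partial>PiM T QQ)"
      by (simp only: h_def W)
    also have "\<dots> = (\<integral>\<^sup>+z. ennreal ((norm (g (ww s k \<omega>) z))\<^sup>2) \<partial>QQ (s, k))"
    proof (rule PiM_component_nn_integral[OF QQ_prob sk])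
      have "(\<lambda>z. g (ww s k \<omega>) z) \<in> borel_measurable N"
        by (rule g_comp_meas) auto
      then show "(\<lambda>z. ennreal ((norm (g (ww s k \<omega>) z))\<^sup>2)) \<in> borel_measurable (QQ (s, k))"
        by simp
    qed
    finally show "(\<integral>\<^sup>+x. h (\<lambda>i\<in>J. XX i \<omega>) x \<partial>PiM T QQ) = (\<integral>\<^sup>+z. ennreal ((norm (g (ww s k \<omega>) z))\<^sup>2) \<partial>distr M N (\<xi> s k))"
      by simp
  qed
  also have "\<dots> \<le> (\<integral>\<^sup>+\<omega>. ennreal (G\<^sup>2) \<partial>M)"
    by (rule nn_integral_mono_AE[OF sm])
  also have "\<dots> = ennreal (G\<^sup>2)" by (simp add: emeasure_space_1)
  finally show ?thesis .
qed

abbreviation "wbar r \<omega> \<equiv> (1 / real K) *\<^sub>R (\<Sum>k=1..K. ww r k \<omega>)"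
abbreviation "Bv r \<omega> \<equiv> wbar r \<omega> - wstar - eta r *\<^sub>R ((1 / real K) *\<^sub>R (\<Sum>k=1..K. grad (ww r k \<omega>)))"

lemma wbar_Suc: "wbar (Suc t) \<omega> = wbar t \<omega> - eta t *\<^sub>R ((1 / real K) *\<^sub>R (\<Sum>k=1..K. g (ww t k \<omega>) (\<xi> t k \<omega>)))"
  using psgd_sum_Suc[OF K, of w0 g "\<lambda>r k. \<xi> r k \<omega>" "\<lambda>r. 4 / (\<mu> * (a + real r))" H layer Hl t]
  by (simp add: scaleR_diff_right)

lemma sum_T: "(\<Sum>i\<in>{t} \<times> {1..K}. F i) = (\<Sum>k=1..K. F (t, k))"
proof -
  have "{t} \<times> {1..K} = Pair t ` {1..K}" by auto
  then show ?thesis by (simp add: sum.reindex inj_on_def)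
qed

lemma wbar_meas: "(\<lambda>\<omega>. wbar r \<omega>) \<in> borel_measurable M"
  using ww_meas by (intro borel_measurable_scaleR borel_measurable_const borel_measurable_sum) auto

lemma Bv_meas: "(\<lambda>\<omega>. Bv r \<omega>) \<in> borel_measurable M"
proof -
  have "(\<lambda>\<omega>. (\<Sum>k=1..K. grad (ww r k \<omega>))) \<in> borel_measurable M"
    using ww_meas by (intro borel_measurable_sum) (auto intro: measurable_compose[OF _ grad_meas])
  then show ?thesis using wbar_meas by measurable
qed

lemma D_facts:
  shows "(\<lambda>z. g v z - grad v) \<in> borel_measurable (distr M N (\<xi> r k))"
    and "integrable (distr M N (\<xi> r k)) (\<lambda>z. g v z - grad v)"
    and "(\<integral>z. g v z - grad v \<partial>distr M N (\<xi> r k)) = 0"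
proof -
  have P: "prob_space (distr M N (\<xi> r k))" using QQ_prob[of "(r, k)"] by simp
  have fm: "finite_measure (distr M N (\<xi> r k))" using P by (rule prob_space.axioms(1))
  have gm: "(\<lambda>z. g v z) \<in> borel_measurable N" by (rule g_comp_meas) auto
  then show "(\<lambda>z. g v z - grad v) \<in> borel_measurable (distr M N (\<xi> r k))" by simp
  have ig: "integrable (distr M N (\<xi> r k)) (g v)" using unbiased by simp
  have ic: "integrable (distr M N (\<xi> r k)) (\<lambda>z. grad v)" by (rule finite_measure.integrable_const[OF fm])
  show "integrable (distr M N (\<xi> r k)) (\<lambda>z. g v z - grad v)"
    by (rule Bochner_Integration.integrable_diff[OF _ ic]) (use ig in simp)
  have "(\<integral>z. g v z - grad v \<partial>distr M N (\<xi> r k)) = (\<integral>z. g v z \<partial>distr M N (\<xi> r k)) - (\<integral>z. grad v \<partial>distr M N (\<xi> r k))"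
    by (rule Bochner_Integration.integral_diff[OF _ ic]) (use ig in simp)
  also have "(\<integral>z. grad v \<partial>distr M N (\<xi> r k)) = grad v"
    by (simp only: lebesgue_integral_const prob_space.prob_space[OF P] scaleR_one)
  also have "(\<integral>z. g v z \<partial>distr M N (\<xi> r k)) = grad v" using unbiased by simp
  finally show "(\<integral>z. g v z - grad v \<partial>distr M N (\<xi> r k)) = 0" by simp
qed

lemma step_expect:
  assumes var: "\<forall>k\<in>{1..K}. AE \<omega> in M. (\<integral>\<^sup>+x. ennreal ((norm (g (ww t k \<omega>) x - grad (ww t k \<omega>)))\<^sup>2) \<partial>distr M N (\<xi> t k)) \<le> ennreal (\<sigma>\<^sup>2)"
  shows "(\<integral>\<^sup>+\<omega>. ennreal ((norm (wbar (Suc t) \<omega> - wstar))\<^sup>2) \<partial>M)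
     \<le> (\<integral>\<^sup>+\<omega>. ennreal ((norm (Bv t \<omega>))\<^sup>2) \<partial>M) + ennreal ((eta t)\<^sup>2 * \<sigma>\<^sup>2 / real K)"
proof -
  interpret prob_space M by (rule M)
  define J where "J = {..<t} \<times> {1..K}"
  define T where "T = {t} \<times> {1..K}"
  define c where "c = - (eta t / real K)"
  define Dy where "Dy y i z = g (wy t (snd i) y) z - grad (wy t (snd i) y)" for y :: "nat \<times> nat \<Rightarrow> 'b" and i :: "nat \<times> nat" and z
  define By where "By y = (1 / real K) *\<^sub>R (\<Sum>k=1..K. wy t k y) - wstar - eta t *\<^sub>R ((1 / real K) *\<^sub>R (\<Sum>k=1..K. grad (wy t k y)))" for y :: "nat \<times> nat \<Rightarrow> 'b"
  define h where "h y x = ennreal ((norm (By y + c *\<^sub>R (\<Sum>i\<in>T. Dy y i (x i))))\<^sup>2)" for y x :: "nat \<times> nat \<Rightarrow> 'b"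
  have W: "wy t k (\<lambda>i\<in>J. XX i \<omega>) = ww t k \<omega>" if "k \<in> {1..K}" for k \<omega>
    using that by (intro wy_local) (auto simp: J_def)
  have ByW: "By (\<lambda>i\<in>J. XX i \<omega>) = Bv t \<omega>" for \<omega>
  proof -
    have "(\<Sum>k=1..K. wy t k (\<lambda>i\<in>J. XX i \<omega>)) = (\<Sum>k=1..K. ww t k \<omega>)" by (rule sum.cong[OF refl]) (simp only: W)
    moreover have "(\<Sum>k=1..K. grad (wy t k (\<lambda>i\<in>J. XX i \<omega>))) = (\<Sum>k=1..K. grad (ww t k \<omega>))" by (rule sum.cong[OF refl]) (simp only: W)
    ultimately show ?thesis by (simp add: By_def)
  qed
  have DyW: "(\<Sum>i\<in>T. Dy (\<lambda>i\<in>J. XX i \<omega>) i (x i)) = (\<Sum>k=1..K. g (ww t k \<omega>) (x (t, k)) - grad (ww t k \<omega>))" for \<omega> x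
    unfolding T_def sum_T by (rule sum.cong[OF refl]) (simp only: Dy_def W snd_conv)
  have lhs: "wbar (Suc t) \<omega> - wstar = Bv t \<omega> + c *\<^sub>R (\<Sum>k=1..K. g (ww t k \<omega>) (\<xi> t k \<omega>) - grad (ww t k \<omega>))" for \<omega>
    unfolding wbar_Suc c_def by (simp add: sum_subtractf algebra_simps scaleR_diff_right)
  have hm: "case_prod h \<in> borel_measurable (PiM J (\<lambda>_. N) \<Otimes>\<^sub>M PiM T (\<lambda>_. N))"
  proof -
    let ?PP = "PiM J (\<lambda>_. N) \<Otimes>\<^sub>M PiM T (\<lambda>_. N)"
    have m1: "(\<lambda>p. wy t k (fst p)) \<in> borel_measurable ?PP" if "k \<in> {1..K}" for k
      by (rule wy_fst_meas) (use that in \<open>auto simp: J_def\<close>)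
    have m1g: "(\<lambda>p. grad (wy t k (fst p))) \<in> borel_measurable ?PP" if "k \<in> {1..K}" for k
      using m1[OF that] by measurable
    have m2: "(\<lambda>p. By (fst p)) \<in> borel_measurable ?PP"
    proof -
      have "(\<lambda>p. \<Sum>k=1..K. wy t k (fst p)) \<in> borel_measurable ?PP" using m1 by (intro borel_measurable_sum) auto
      moreover have "(\<lambda>p. \<Sum>k=1..K. grad (wy t k (fst p))) \<in> borel_measurable ?PP" using m1g by (intro borel_measurable_sum) auto
      ultimately show ?thesis unfolding By_def by measurable
    qed
    have m3: "(\<lambda>p. \<Sum>i\<in>T. Dy (fst p) i (snd p i)) \<in> borel_measurable ?PP"
    proof (rule borel_measurable_sum)
      fix i assume i: "i \<in> T"
      then have k: "snd i \<in> {1..K}" by (auto simp: T_def)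
      have "(\<lambda>p. g (wy t (snd i) (fst p)) (snd p i)) \<in> borel_measurable ?PP"
        by (rule g_comp_meas[OF m1[OF k] snd_comp_meas[OF i]])
      then show "(\<lambda>p. Dy (fst p) i (snd p i)) \<in> borel_measurable ?PP"
        unfolding Dy_def using m1g[OF k] by measurable
    qed
    have "(\<lambda>p. h (fst p) (snd p)) \<in> borel_measurable ?PP"
      unfolding h_def using m2 m3 by measurable
    then show ?thesis by (simp add: case_prod_beta')
  qed
  have "(\<integral>\<^sup>+\<omega>. ennreal ((norm (wbar (Suc t) \<omega> - wstar))\<^sup>2) \<partial>M)
      = (\<integral>\<^sup>+\<omega>. h (\<lambda>i\<in>J. XX i \<omega>) (\<lambda>i\<in>T. XX i \<omega>) \<partial>M)"
  proof (rule nn_integral_cong)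
    fix \<omega>
    have "(\<Sum>k=1..K. g (ww t k \<omega>) ((\<lambda>i\<in>T. XX i \<omega>) (t, k)) - grad (ww t k \<omega>))
        = (\<Sum>k=1..K. g (ww t k \<omega>) (\<xi> t k \<omega>) - grad (ww t k \<omega>))"
      by (rule sum.cong) (simp_all add: T_def)
    then show "ennreal ((norm (wbar (Suc t) \<omega> - wstar))\<^sup>2) = h (\<lambda>i\<in>J. XX i \<omega>) (\<lambda>i\<in>T. XX i \<omega>)"
      by (simp only: h_def ByW DyW lhs)
  qed
  also have "\<dots> = (\<integral>\<^sup>+\<omega>. (\<integral>\<^sup>+x. h (\<lambda>i\<in>J. XX i \<omega>) x \<partial>PiM T QQ) \<partial>M)"
    unfolding J_def T_def by (rule indep_split_here) (use hm in \<open>simp add: J_def T_def\<close>)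
  also have "\<dots> \<le> (\<integral>\<^sup>+\<omega>. ennreal ((norm (Bv t \<omega>))\<^sup>2) + ennreal ((eta t)\<^sup>2 * \<sigma>\<^sup>2 / real K) \<partial>M)"
  proof (rule nn_integral_mono_AE)
    have AEv: "AE \<omega> in M. \<forall>k\<in>{1..K}. (\<integral>\<^sup>+x. ennreal ((norm (g (ww t k \<omega>) x - grad (ww t k \<omega>)))\<^sup>2) \<partial>distr M N (\<xi> t k)) \<le> ennreal (\<sigma>\<^sup>2)"
      by (rule eventually_ball_finite[OF finite_atLeastAtMost var])
    show "AE \<omega> in M. (\<integral>\<^sup>+x. h (\<lambda>i\<in>J. XX i \<omega>) x \<partial>PiM T QQ) \<le> ennreal ((norm (Bv t \<omega>))\<^sup>2) + ennreal ((eta t)\<^sup>2 * \<sigma>\<^sup>2 / real K)"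
      using AEv
    proof (rule eventually_mono)
      fix \<omega> assume v: "\<forall>k\<in>{1..K}. (\<integral>\<^sup>+x. ennreal ((norm (g (ww t k \<omega>) x - grad (ww t k \<omega>)))\<^sup>2) \<partial>distr M N (\<xi> t k)) \<le> ennreal (\<sigma>\<^sup>2)"
      define D' where "D' i z = g (ww t (snd i) \<omega>) z - grad (ww t (snd i) \<omega>)" for i :: "nat \<times> nat" and z
      have Qi: "QQ i = distr M N (\<xi> t (snd i))" if "i \<in> T" for i using that by (auto simp: T_def)
      have Dsum: "(\<Sum>i\<in>T. Dy (\<lambda>i\<in>J. XX i \<omega>) i (x i)) = (\<Sum>i\<in>T. D' i (x i))" for x
      proof (rule sum.cong[OF refl])
        fix i assume "i \<in> T"
        then have "snd i \<in> {1..K}" by (auto simp: T_def)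
        then show "Dy (\<lambda>i\<in>J. XX i \<omega>) i (x i) = D' i (x i)" by (simp only: Dy_def D'_def W)
      qed
      have "(\<integral>\<^sup>+x. h (\<lambda>i\<in>J. XX i \<omega>) x \<partial>PiM T QQ)
          = (\<integral>\<^sup>+x. ennreal ((norm (Bv t \<omega> + c *\<^sub>R (\<Sum>i\<in>T. D' i (x i))))\<^sup>2) \<partial>PiM T QQ)"
        by (simp only: h_def ByW Dsum)
      also have "\<dots> = ennreal ((norm (Bv t \<omega>))\<^sup>2) + ennreal (c\<^sup>2) * (\<Sum>i\<in>T. \<integral>\<^sup>+y. ennreal ((norm (D' i y))\<^sup>2) \<partial>QQ i)"
      proof (rule nn_integral_PiM_sum_shift[OF QQ_prob])
        show "finite T" by (simp add: T_def)
        fix i assume i: "i \<in> T"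
        show "D' i \<in> borel_measurable (QQ i)" unfolding Qi[OF i] D'_def by (rule D_facts(1))
        show "integrable (QQ i) (D' i)" unfolding Qi[OF i] D'_def by (rule D_facts(2))
        show "(\<integral>y. D' i y \<partial>QQ i) = 0" unfolding Qi[OF i] D'_def by (rule D_facts(3))
        have "snd i \<in> {1..K}" using i by (auto simp: T_def)
        then have "(\<integral>\<^sup>+y. ennreal ((norm (D' i y))\<^sup>2) \<partial>QQ i) \<le> ennreal (\<sigma>\<^sup>2)"
          using v Qi[OF i] by (simp add: D'_def)
        then show "(\<integral>\<^sup>+y. ennreal ((norm (D' i y))\<^sup>2) \<partial>QQ i) < \<infinity>"
          unfolding infinity_ennreal_def using ennreal_less_top[of "\<sigma>\<^sup>2"] by (rule le_less_trans)
      qed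
      also have "\<dots> \<le> ennreal ((norm (Bv t \<omega>))\<^sup>2) + ennreal (c\<^sup>2) * (\<Sum>i\<in>T. ennreal (\<sigma>\<^sup>2))"
      proof -
        have "(\<Sum>i\<in>T. \<integral>\<^sup>+y. ennreal ((norm (D' i y))\<^sup>2) \<partial>QQ i) \<le> (\<Sum>i\<in>T. ennreal (\<sigma>\<^sup>2))"
        proof (rule sum_mono)
          fix i assume i: "i \<in> T"
          have "snd i \<in> {1..K}" using i by (auto simp: T_def)
          then show "(\<integral>\<^sup>+y. ennreal ((norm (D' i y))\<^sup>2) \<partial>QQ i) \<le> ennreal (\<sigma>\<^sup>2)"
            using v Qi[OF i] by (simp add: D'_def)
        qed
        then show ?thesis by (intro add_left_mono mult_left_mono) auto
      qed
      also have "ennreal (c\<^sup>2) * (\<Sum>i\<in>T. ennreal (\<sigma>\<^sup>2)) = ennreal ((eta t)\<^sup>2 * \<sigma>\<^sup>2 / real K)"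
      proof -
        have cT: "card T = K" by (simp add: T_def card_cartesian_product)
        have "(\<Sum>i\<in>T. ennreal (\<sigma>\<^sup>2)) = ennreal (real K * \<sigma>\<^sup>2)"
          using cT by (simp add: ennreal_of_nat_eq_real_of_nat ennreal_mult)
        then have "ennreal (c\<^sup>2) * (\<Sum>i\<in>T. ennreal (\<sigma>\<^sup>2)) = ennreal (c\<^sup>2 * (real K * \<sigma>\<^sup>2))"
          by (simp only: ennreal_mult[symmetric] zero_le_power2 mult_nonneg_nonneg of_nat_0_le_iff)
        also have "c\<^sup>2 * (real K * \<sigma>\<^sup>2) = (eta t)\<^sup>2 * \<sigma>\<^sup>2 / real K"
        proof -
          have gen: "(- (e / real K))\<^sup>2 * (real K * \<sigma>\<^sup>2) = e\<^sup>2 * \<sigma>\<^sup>2 / real K" for e :: real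
            using K by (simp add: power2_eq_square field_simps)
          show ?thesis unfolding c_def by (rule gen)
        qed
        finally show ?thesis .
      qed
      finally show "(\<integral>\<^sup>+x. h (\<lambda>i\<in>J. XX i \<omega>) x \<partial>PiM T QQ) \<le> ennreal ((norm (Bv t \<omega>))\<^sup>2) + ennreal ((eta t)\<^sup>2 * \<sigma>\<^sup>2 / real K)" .
    qed
  qed
  also have "\<dots> = (\<integral>\<^sup>+\<omega>. ennreal ((norm (Bv t \<omega>))\<^sup>2) \<partial>M) + ennreal ((eta t)\<^sup>2 * \<sigma>\<^sup>2 / real K)"
  proof -
    have "(\<lambda>\<omega>. ennreal ((norm (Bv t \<omega>))\<^sup>2)) \<in> borel_measurable M" using Bv_meas by measurable
    then show ?thesis by (subst nn_integral_add) (auto simp: emeasure_space_1)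
  qed
  finally show ?thesis .
qed

lemma eta_window:
  assumes "s < t" "t < s + H"
  shows "eta s \<le> 2 * eta t"
proof -
  have "real t < real s + real H" using assms by simp
  then have "a + real t \<le> 2 * (a + real s)" using a_gt_H by simp
  then have le: "\<mu> * (a + real t) \<le> 2 * \<mu> * (a + real s)" using mu_pos
    by (metis mult.assoc mult.left_commute mult_le_cancel_left_pos)
  have "4 / (\<mu> * (a + real s)) = 8 / (2 * \<mu> * (a + real s))" by simp
  also have "\<dots> \<le> 8 / (\<mu> * (a + real t))"
    by (rule frac_le) (use le mu_pos a_pos in auto)
  finally show ?thesis by simp
qed

lemma card_window: "card {s. s < t \<and> t < s + H} \<le> H"
proof -
  have "{s. s < t \<and> t < s + H} \<subseteq> {t - H..<t}" by auto
  then have "card {s. s < t \<and> t < s + H} \<le> card {t - H..<t}" by (intro card_mono) auto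
  then show ?thesis by simp
qed

lemma window_sum:
  "(\<Sum>s\<in>{s. s < t \<and> t < s + H}. (eta s)\<^sup>2) \<le> real H * (4 * (eta t)\<^sup>2)"
proof -
  have "(\<Sum>s\<in>{s. s < t \<and> t < s + H}. (eta s)\<^sup>2) \<le> (\<Sum>s\<in>{s. s < t \<and> t < s + H}. 4 * (eta t)\<^sup>2)"
  proof (rule sum_mono)
    fix s assume "s \<in> {s. s < t \<and> t < s + H}"
    then have "eta s \<le> 2 * eta t" by (intro eta_window) auto
    then have "(eta s)\<^sup>2 \<le> (2 * eta t)\<^sup>2" using eta_pos[of s] by (intro power_mono) auto
    moreover have sq: "(2 * x)\<^sup>2 = 4 * x\<^sup>2" for x :: real by (simp add: power2_eq_square)
    ultimately show "(eta s)\<^sup>2 \<le> 4 * (eta t)\<^sup>2" by (simp only: sq)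
  qed
  also have "\<dots> = real (card {s. s < t \<and> t < s + H}) * (4 * (eta t)\<^sup>2)" by simp
  also have "\<dots> \<le> real H * (4 * (eta t)\<^sup>2)" using card_window[of t] by (intro mult_right_mono) auto
  finally show ?thesis .
qed

lemma V_bound:
  assumes sm: "\<forall>s<R. \<forall>k\<in>{1..K}. AE \<omega> in M. (\<integral>\<^sup>+x. ennreal ((norm (g (ww s k \<omega>) x))\<^sup>2) \<partial>distr M N (\<xi> s k)) \<le> ennreal (G\<^sup>2)"
    and tR: "t < R"
  shows "(\<integral>\<^sup>+\<omega>. ennreal ((1 / real K) * (\<Sum>k=1..K. (norm (wbar t \<omega> - ww t k \<omega>))\<^sup>2)) \<partial>M)
      \<le> ennreal (4 * (eta t)\<^sup>2 * G\<^sup>2 * (real H)\<^sup>2)"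
proof -
  define W where "W = {s. s < t \<and> t < s + H}"
  define cs where "cs s = real H / real K * (eta s)\<^sup>2" for s
  have csn: "0 \<le> cs s" for s by (simp add: cs_def)
  have finW: "finite W" by (simp add: W_def)
  have pw: "ennreal ((1 / real K) * (\<Sum>k=1..K. (norm (wbar t \<omega> - ww t k \<omega>))\<^sup>2))
      \<le> (\<Sum>s\<in>W. \<Sum>k=1..K. ennreal (cs s) * ennreal ((norm (g (ww s k \<omega>) (\<xi> s k \<omega>)))\<^sup>2))" for \<omega>
  proof -
    have dev: "(\<Sum>k=1..K. (norm (wbar t \<omega> - ww t k \<omega>))\<^sup>2)
        \<le> real H * (\<Sum>s\<in>W. (eta s)\<^sup>2 * (\<Sum>k=1..K. (norm (g (ww s k \<omega>) (\<xi> s k \<omega>)))\<^sup>2))"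
      unfolding W_def by (rule deviation[OF H K])
    have "(1 / real K) * (\<Sum>k=1..K. (norm (wbar t \<omega> - ww t k \<omega>))\<^sup>2)
        \<le> (1 / real K) * (real H * (\<Sum>s\<in>W. (eta s)\<^sup>2 * (\<Sum>k=1..K. (norm (g (ww s k \<omega>) (\<xi> s k \<omega>)))\<^sup>2)))"
      using dev by (intro mult_left_mono) auto
    also have "\<dots> = (\<Sum>s\<in>W. \<Sum>k=1..K. cs s * (norm (g (ww s k \<omega>) (\<xi> s k \<omega>)))\<^sup>2)"
      by (simp add: cs_def sum_distrib_left mult.assoc)
    finally have "ennreal ((1 / real K) * (\<Sum>k=1..K. (norm (wbar t \<omega> - ww t k \<omega>))\<^sup>2))
        \<le> ennreal (\<Sum>s\<in>W. \<Sum>k=1..K. cs s * (norm (g (ww s k \<omega>) (\<xi> s k \<omega>)))\<^sup>2)"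
      by (rule ennreal_leI)
    also have "\<dots> = (\<Sum>s\<in>W. \<Sum>k=1..K. ennreal (cs s * (norm (g (ww s k \<omega>) (\<xi> s k \<omega>)))\<^sup>2))"
      using csn by (simp add: sum_nonneg)
    also have "\<dots> = (\<Sum>s\<in>W. \<Sum>k=1..K. ennreal (cs s) * ennreal ((norm (g (ww s k \<omega>) (\<xi> s k \<omega>)))\<^sup>2))"
      using csn by (simp add: ennreal_mult)
    finally show ?thesis .
  qed
  have "(\<integral>\<^sup>+\<omega>. ennreal ((1 / real K) * (\<Sum>k=1..K. (norm (wbar t \<omega> - ww t k \<omega>))\<^sup>2)) \<partial>M)
      \<le> (\<integral>\<^sup>+\<omega>. (\<Sum>s\<in>W. \<Sum>k=1..K. ennreal (cs s) * ennreal ((norm (g (ww s k \<omega>) (\<xi> s k \<omega>)))\<^sup>2)) \<partial>M)"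
    by (rule nn_integral_mono) (rule pw)
  also have "\<dots> = (\<Sum>s\<in>W. \<Sum>k=1..K. ennreal (cs s) * (\<integral>\<^sup>+\<omega>. ennreal ((norm (g (ww s k \<omega>) (\<xi> s k \<omega>)))\<^sup>2) \<partial>M))"
  proof -
    have m: "(\<lambda>\<omega>. ennreal ((norm (g (ww s k \<omega>) (\<xi> s k \<omega>)))\<^sup>2)) \<in> borel_measurable M" if "k \<in> {1..K}" for s k
      using gk_meas[OF that, of s] by measurable
    have "(\<integral>\<^sup>+\<omega>. (\<Sum>s\<in>W. \<Sum>k=1..K. ennreal (cs s) * ennreal ((norm (g (ww s k \<omega>) (\<xi> s k \<omega>)))\<^sup>2)) \<partial>M)
        = (\<Sum>s\<in>W. (\<integral>\<^sup>+\<omega>. (\<Sum>k=1..K. ennreal (cs s) * ennreal ((norm (g (ww s k \<omega>) (\<xi> s k \<omega>)))\<^sup>2)) \<partial>M))"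
      by (rule nn_integral_sum) (use m in \<open>auto intro!: borel_measurable_sum borel_measurable_times_ennreal\<close>)
    also have "\<dots> = (\<Sum>s\<in>W. \<Sum>k=1..K. (\<integral>\<^sup>+\<omega>. ennreal (cs s) * ennreal ((norm (g (ww s k \<omega>) (\<xi> s k \<omega>)))\<^sup>2) \<partial>M))"
      by (intro sum.cong refl nn_integral_sum) (use m in auto)
    also have "\<dots> = (\<Sum>s\<in>W. \<Sum>k=1..K. ennreal (cs s) * (\<integral>\<^sup>+\<omega>. ennreal ((norm (g (ww s k \<omega>) (\<xi> s k \<omega>)))\<^sup>2) \<partial>M))"
      by (intro sum.cong refl nn_integral_cmult) (use m in auto)
    finally show ?thesis .
  qed
  also have "\<dots> \<le> (\<Sum>s\<in>W. \<Sum>k=1..K. ennreal (cs s) * ennreal (G\<^sup>2))"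
  proof (intro sum_mono mult_left_mono)
    fix s k assume s: "s \<in> W" and k: "k \<in> {1..K}"
    have "s < R" using s tR by (simp add: W_def)
    then show "(\<integral>\<^sup>+\<omega>. ennreal ((norm (g (ww s k \<omega>) (\<xi> s k \<omega>)))\<^sup>2) \<partial>M) \<le> ennreal (G\<^sup>2)"
      using sm k by (intro gk_second_moment) auto
  qed auto
  also have "\<dots> = (\<Sum>s\<in>W. \<Sum>k=1..K. ennreal (cs s * G\<^sup>2))"
    using csn by (simp only: ennreal_mult[symmetric] zero_le_power2)
  also have "\<dots> = (\<Sum>s\<in>W. ennreal (\<Sum>k=1..K. cs s * G\<^sup>2))"
    by (intro sum.cong refl sum_ennreal) (use csn in auto)
  also have "\<dots> = ennreal (\<Sum>s\<in>W. \<Sum>k=1..K. cs s * G\<^sup>2)"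
    by (rule sum_ennreal) (use csn in \<open>auto intro!: sum_nonneg\<close>)
  also have "(\<Sum>s\<in>W. \<Sum>k=1..K. cs s * G\<^sup>2) = real H * G\<^sup>2 * (\<Sum>s\<in>W. (eta s)\<^sup>2)"
    using K by (simp add: cs_def sum_distrib_left mult_ac)
  also have "\<dots> \<le> real H * G\<^sup>2 * (real H * (4 * (eta t)\<^sup>2))"
    unfolding W_def by (intro mult_left_mono window_sum) auto
  finally have fin: "(\<integral>\<^sup>+\<omega>. ennreal ((1 / real K) * (\<Sum>k=1..K. (norm (wbar t \<omega> - ww t k \<omega>))\<^sup>2)) \<partial>M)
      \<le> ennreal (real H * G\<^sup>2 * (real H * (4 * (eta t)\<^sup>2)))" by (auto intro: ennreal_leI)
  have gen: "real H * G\<^sup>2 * (real H * (4 * e)) = 4 * e * G\<^sup>2 * (real H)\<^sup>2" for e :: real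
    by (simp add: power2_eq_square mult_ac)
  show ?thesis using fin unfolding gen .
qed

lemma step_pointwise:
  "(norm (Bv t \<omega>))\<^sup>2 + eta t / 2 * (f (wbar t \<omega>) - f wstar)
     \<le> (1 - \<mu> * eta t) * (norm (wbar t \<omega> - wstar))\<^sup>2
       + 2 * \<beta> * eta t * ((1 / real K) * (\<Sum>k=1..K. (norm (wbar t \<omega> - ww t k \<omega>))\<^sup>2))"
  using step_det[OF smooth sconv minimizer beta_pos eta_pos eta_le, of "{1..K}" "\<lambda>k. ww t k \<omega>"] K
  by simp

lemma recursion:
  assumes var: "\<forall>k\<in>{1..K}. AE \<omega> in M. (\<integral>\<^sup>+x. ennreal ((norm (g (ww t k \<omega>) x - grad (ww t k \<omega>)))\<^sup>2) \<partial>distr M N (\<xi> t k)) \<le> ennreal (\<sigma>\<^sup>2)"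
    and sm: "\<forall>s<R. \<forall>k\<in>{1..K}. AE \<omega> in M. (\<integral>\<^sup>+x. ennreal ((norm (g (ww s k \<omega>) x))\<^sup>2) \<partial>distr M N (\<xi> s k)) \<le> ennreal (G\<^sup>2)"
    and tR: "t < R"
  shows "(\<integral>\<^sup>+\<omega>. ennreal ((norm (wbar (Suc t) \<omega> - wstar))\<^sup>2) \<partial>M)
           + ennreal (eta t / 2) * (\<integral>\<^sup>+\<omega>. ennreal (f (wbar t \<omega>) - f wstar) \<partial>M)
       \<le> ennreal (1 - \<mu> * eta t) * (\<integral>\<^sup>+\<omega>. ennreal ((norm (wbar t \<omega> - wstar))\<^sup>2) \<partial>M)
           + ennreal ((eta t)\<^sup>2 * \<sigma>\<^sup>2 / real K + 8 * \<beta> * (eta t) ^ 3 * G\<^sup>2 * (real H)\<^sup>2)"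
proof -
  define V where "V \<omega> = (1 / real K) * (\<Sum>k=1..K. (norm (wbar t \<omega> - ww t k \<omega>))\<^sup>2)" for \<omega>
  have Vn: "0 \<le> V \<omega>" for \<omega> by (simp add: V_def sum_nonneg)
  have fn: "0 \<le> f (wbar t \<omega>) - f wstar" for \<omega> using minimizer by simp
  have en: "0 \<le> eta t / 2" using eta_pos[of t] by simp
  have men: "0 \<le> 1 - \<mu> * eta t" using mu_eta_le[of t] by simp
  have ben: "0 \<le> 2 * \<beta> * eta t" using eta_pos[of t] beta_pos by simp
  have mB: "(\<lambda>\<omega>. ennreal ((norm (Bv t \<omega>))\<^sup>2)) \<in> borel_measurable M" using Bv_meas by measurable
  have mF: "(\<lambda>\<omega>. ennreal (f (wbar t \<omega>) - f wstar)) \<in> borel_measurable M" using wbar_meas by measurable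
  have mW: "(\<lambda>\<omega>. ennreal ((norm (wbar t \<omega> - wstar))\<^sup>2)) \<in> borel_measurable M" using wbar_meas by measurable
  have mV: "(\<lambda>\<omega>. ennreal (V \<omega>)) \<in> borel_measurable M"
  proof -
    have "(\<lambda>\<omega>. (\<Sum>k=1..K. (norm (wbar t \<omega> - ww t k \<omega>))\<^sup>2)) \<in> borel_measurable M"
      using wbar_meas ww_meas by (intro borel_measurable_sum) (auto intro!: borel_measurable_power borel_measurable_norm borel_measurable_diff)
    then show ?thesis unfolding V_def by measurable
  qed
  have "(\<integral>\<^sup>+\<omega>. ennreal ((norm (Bv t \<omega>))\<^sup>2) \<partial>M) + ennreal (eta t / 2) * (\<integral>\<^sup>+\<omega>. ennreal (f (wbar t \<omega>) - f wstar) \<partial>M)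
      = (\<integral>\<^sup>+\<omega>. ennreal ((norm (Bv t \<omega>))\<^sup>2) + ennreal (eta t / 2) * ennreal (f (wbar t \<omega>) - f wstar) \<partial>M)"
    using mB mF by (simp add: nn_integral_add nn_integral_cmult)
  also have "\<dots> = (\<integral>\<^sup>+\<omega>. ennreal ((norm (Bv t \<omega>))\<^sup>2 + eta t / 2 * (f (wbar t \<omega>) - f wstar)) \<partial>M)"
    using en fn by (intro nn_integral_cong ennreal_lin1) auto
  also have "\<dots> \<le> (\<integral>\<^sup>+\<omega>. ennreal ((1 - \<mu> * eta t) * (norm (wbar t \<omega> - wstar))\<^sup>2 + 2 * \<beta> * eta t * V \<omega>) \<partial>M)"
    unfolding V_def by (intro nn_integral_mono ennreal_leI step_pointwise)
  also have "\<dots> = (\<integral>\<^sup>+\<omega>. ennreal (1 - \<mu> * eta t) * ennreal ((norm (wbar t \<omega> - wstar))\<^sup>2) + ennreal (2 * \<beta> * eta t) * ennreal (V \<omega>) \<partial>M)"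
    using men ben Vn by (intro nn_integral_cong ennreal_lin2[symmetric]) auto
  also have "\<dots> = ennreal (1 - \<mu> * eta t) * (\<integral>\<^sup>+\<omega>. ennreal ((norm (wbar t \<omega> - wstar))\<^sup>2) \<partial>M)
       + ennreal (2 * \<beta> * eta t) * (\<integral>\<^sup>+\<omega>. ennreal (V \<omega>) \<partial>M)"
    using mW mV by (simp add: nn_integral_add nn_integral_cmult)
  also have "\<dots> \<le> ennreal (1 - \<mu> * eta t) * (\<integral>\<^sup>+\<omega>. ennreal ((norm (wbar t \<omega> - wstar))\<^sup>2) \<partial>M)
       + ennreal (2 * \<beta> * eta t) * ennreal (4 * (eta t)\<^sup>2 * G\<^sup>2 * (real H)\<^sup>2)"
    unfolding V_def by (intro add_left_mono mult_left_mono V_bound[OF sm tR]) auto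
  also have "ennreal (2 * \<beta> * eta t) * ennreal (4 * (eta t)\<^sup>2 * G\<^sup>2 * (real H)\<^sup>2) = ennreal (8 * \<beta> * (eta t) ^ 3 * G\<^sup>2 * (real H)\<^sup>2)"
  proof -
    have "ennreal (2 * \<beta> * eta t) * ennreal (4 * (eta t)\<^sup>2 * G\<^sup>2 * (real H)\<^sup>2) = ennreal ((2 * \<beta> * eta t) * (4 * (eta t)\<^sup>2 * G\<^sup>2 * (real H)\<^sup>2))"
      by (rule ennreal_mult[symmetric]) (use ben in auto)
    also have "(2 * \<beta> * eta t) * (4 * (eta t)\<^sup>2 * G\<^sup>2 * (real H)\<^sup>2) = 8 * \<beta> * (eta t) ^ 3 * G\<^sup>2 * (real H)\<^sup>2"
    proof -
      have gen: "(2 * \<beta> * e) * (4 * e\<^sup>2 * G\<^sup>2 * (real H)\<^sup>2) = 8 * \<beta> * e ^ 3 * G\<^sup>2 * (real H)\<^sup>2" for e :: real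
        by (simp add: power2_eq_square power3_eq_cube mult_ac)
      show ?thesis by (rule gen)
    qed
    finally show ?thesis .
  qed
  finally have X: "(\<integral>\<^sup>+\<omega>. ennreal ((norm (Bv t \<omega>))\<^sup>2) \<partial>M) + ennreal (eta t / 2) * (\<integral>\<^sup>+\<omega>. ennreal (f (wbar t \<omega>) - f wstar) \<partial>M)
      \<le> ennreal (1 - \<mu> * eta t) * (\<integral>\<^sup>+\<omega>. ennreal ((norm (wbar t \<omega> - wstar))\<^sup>2) \<partial>M)
       + ennreal (8 * \<beta> * (eta t) ^ 3 * G\<^sup>2 * (real H)\<^sup>2)" .
  have Y: "(\<integral>\<^sup>+\<omega>. ennreal ((norm (wbar (Suc t) \<omega> - wstar))\<^sup>2) \<partial>M)
     \<le> (\<integral>\<^sup>+\<omega>. ennreal ((norm (Bv t \<omega>))\<^sup>2) \<partial>M) + ennreal ((eta t)\<^sup>2 * \<sigma>\<^sup>2 / real K)"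
    by (rule step_expect[OF var])
  have Z: "ennreal ((eta t)\<^sup>2 * \<sigma>\<^sup>2 / real K + 8 * \<beta> * (eta t) ^ 3 * G\<^sup>2 * (real H)\<^sup>2)
      = ennreal ((eta t)\<^sup>2 * \<sigma>\<^sup>2 / real K) + ennreal (8 * \<beta> * (eta t) ^ 3 * G\<^sup>2 * (real H)\<^sup>2)"
    by (rule ennreal_plus) (use eta_pos[of t] beta_pos in auto)
  show ?thesis
    unfolding Z
  proof -
    define A1 where "A1 = (\<integral>\<^sup>+\<omega>. ennreal ((norm (wbar (Suc t) \<omega> - wstar))\<^sup>2) \<partial>M)"
    define eE where "eE = ennreal (eta t / 2) * (\<integral>\<^sup>+\<omega>. ennreal (f (wbar t \<omega>) - f wstar) \<partial>M)"
    define B where "B = (\<integral>\<^sup>+\<omega>. ennreal ((norm (Bv t \<omega>))\<^sup>2) \<partial>M)"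
    define cA where "cA = ennreal (1 - \<mu> * eta t) * (\<integral>\<^sup>+\<omega>. ennreal ((norm (wbar t \<omega> - wstar))\<^sup>2) \<partial>M)"
    define s1 where "s1 = ennreal ((eta t)\<^sup>2 * \<sigma>\<^sup>2 / real K)"
    define s2 where "s2 = ennreal (8 * \<beta> * (eta t) ^ 3 * G\<^sup>2 * (real H)\<^sup>2)"
    have Y': "A1 \<le> B + s1" using Y by (simp only: A1_def B_def s1_def)
    have X': "B + eE \<le> cA + s2" using X by (simp only: B_def eE_def cA_def s2_def)
    have "A1 + eE \<le> (B + s1) + eE" using Y' by (rule add_right_mono)
    also have "\<dots> = (B + eE) + s1" by (simp only: add_ac)
    also have "\<dots> \<le> (cA + s2) + s1" using X' by (rule add_right_mono)
    also have "\<dots> = cA + (s1 + s2)" by (simp only: add_ac)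
    finally show "A1 + eE \<le> cA + (s1 + s2)" .
  qed
qed

abbreviation "AA t \<equiv> (\<integral>\<^sup>+\<omega>. ennreal ((norm (wbar t \<omega> - wstar))\<^sup>2) \<partial>M)"
abbreviation "EE t \<equiv> (\<integral>\<^sup>+\<omega>. ennreal (f (wbar t \<omega>) - f wstar) \<partial>M)"
abbreviation "st t \<equiv> (eta t)\<^sup>2 * \<sigma>\<^sup>2 / real K + 8 * \<beta> * (eta t) ^ 3 * G\<^sup>2 * (real H)\<^sup>2"
abbreviation "rho t \<equiv> \<mu> * (a + real t) ^ 3 / 4"

lemma st_nonneg: "0 \<le> st t"
  using eta_pos[of t] beta_pos by (intro add_nonneg_nonneg) auto

lemma rho_nonneg: "0 \<le> rho t" using mu_pos a_pos by simp

lemma rho_eta_gen: "m > 0 \<Longrightarrow> x > 0 \<Longrightarrow> m * x ^ 3 / 4 * (4 / (m * x)) = (x::real)\<^sup>2"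
  by (simp add: power3_eq_cube power2_eq_square)

lemma rho_eta: "rho t * eta t = (a + real t)\<^sup>2"
  by (rule rho_eta_gen) (use mu_pos a_pos in auto)

lemma rho_contr_gen: "m > 0 \<Longrightarrow> x > 0 \<Longrightarrow> m * x ^ 3 / 4 * (1 - m * (4 / (m * x))) = m * ((x::real)\<^sup>2 * (x - 4)) / 4"
  by (simp add: power3_eq_cube power2_eq_square field_simps)

lemma rho_contr: "rho t * (1 - \<mu> * eta t) \<le> \<mu> * (a + real t - 1) ^ 3 / 4"
proof -
  define x where "x = a + real t"
  have x1: "x \<ge> 1" using a_ge_16 by (simp add: x_def)
  have "rho t * (1 - \<mu> * eta t) = \<mu> * (x\<^sup>2 * (x - 4)) / 4"
    unfolding x_def by (rule rho_contr_gen) (use mu_pos x1 x_def in auto)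
  also have "\<dots> \<le> \<mu> * (x - 1) ^ 3 / 4"
  proof -
    have "x\<^sup>2 * (x - 4) \<le> (x - 1) ^ 3"
    proof -
      have "(x - 1) ^ 3 - x\<^sup>2 * (x - 4) = x\<^sup>2 + 3 * x - 1"
        by (simp add: power3_eq_cube power2_eq_square algebra_simps)
      moreover have "x\<^sup>2 + 3 * x - 1 \<ge> 0"
      proof -
        have "x\<^sup>2 \<ge> 0" by simp
        then show ?thesis using x1 by linarith
      qed
      ultimately show ?thesis by simp
    qed
    then show ?thesis using mu_pos by (intro divide_right_mono mult_left_mono) auto
  qed
  finally show ?thesis by (simp add: x_def)
qed

lemma telescope:
  assumes var: "\<forall>r<R. \<forall>k\<in>{1..K}. AE \<omega> in M. (\<integral>\<^sup>+x. ennreal ((norm (g (ww r k \<omega>) x - grad (ww r k \<omega>)))\<^sup>2) \<partial>distr M N (\<xi> r k)) \<le> ennreal (\<sigma>\<^sup>2)"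
    and sm: "\<forall>s<R. \<forall>k\<in>{1..K}. AE \<omega> in M. (\<integral>\<^sup>+x. ennreal ((norm (g (ww s k \<omega>) x))\<^sup>2) \<partial>distr M N (\<xi> s k)) \<le> ennreal (G\<^sup>2)"
  shows "T \<le> R \<Longrightarrow> ennreal (\<mu> * (a + real T - 1) ^ 3 / 4) * AA T + (\<Sum>t<T. ennreal ((a + real t)\<^sup>2 / 2) * EE t)
     \<le> ennreal (\<mu> * a ^ 3 / 4) * AA 0 + ennreal (\<Sum>t<T. rho t * st t)"
proof (induction T)
  case 0
  have "a - 1 \<ge> 0" using a_ge_16 by simp
  then have "(a - 1) ^ 3 \<le> a ^ 3" by (intro power_mono) auto
  then have "\<mu> * (a - 1) ^ 3 / 4 \<le> \<mu> * a ^ 3 / 4" using mu_pos by simp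
  then have "ennreal (\<mu> * (a - 1) ^ 3 / 4) * AA 0 \<le> ennreal (\<mu> * a ^ 3 / 4) * AA 0"
    by (intro mult_right_mono ennreal_leI) auto
  then show ?case by simp
next
  case (Suc T)
  have TR: "T < R" using Suc.prems by simp
  have varT: "\<forall>k\<in>{1..K}. AE \<omega> in M. (\<integral>\<^sup>+x. ennreal ((norm (g (ww T k \<omega>) x - grad (ww T k \<omega>)))\<^sup>2) \<partial>distr M N (\<xi> T k)) \<le> ennreal (\<sigma>\<^sup>2)"
    using var TR by auto
  have rec: "AA (Suc T) + ennreal (eta T / 2) * EE T \<le> ennreal (1 - \<mu> * eta T) * AA T + ennreal (st T)"
    by (rule recursion[OF varT sm TR])
  have "ennreal (rho T) * (AA (Suc T) + ennreal (eta T / 2) * EE T) \<le> ennreal (rho T) * (ennreal (1 - \<mu> * eta T) * AA T + ennreal (st T))"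
    using rec by (rule mult_left_mono) simp
  moreover have "ennreal (rho T) * (AA (Suc T) + ennreal (eta T / 2) * EE T) = ennreal (rho T) * AA (Suc T) + ennreal ((a + real T)\<^sup>2 / 2) * EE T"
  proof -
    have "ennreal (rho T) * ennreal (eta T / 2) = ennreal (rho T * (eta T / 2))"
      by (rule ennreal_mult[symmetric]) (use rho_nonneg[of T] eta_pos[of T] in auto)
    also have "rho T * (eta T / 2) = (rho T * eta T) / 2"
      by (rule times_divide_eq_right)
    also have "\<dots> = (a + real T)\<^sup>2 / 2"
      by (subst rho_eta) (rule refl)
    finally have "ennreal (rho T) * ennreal (eta T / 2) = ennreal ((a + real T)\<^sup>2 / 2)" .
    then show ?thesis by (simp add: distrib_left mult.assoc[symmetric])
  qed
  moreover have "ennreal (rho T) * (ennreal (1 - \<mu> * eta T) * AA T + ennreal (st T))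
      \<le> ennreal (\<mu> * (a + real T - 1) ^ 3 / 4) * AA T + ennreal (rho T * st T)"
  proof -
    have "ennreal (rho T) * ennreal (1 - \<mu> * eta T) = ennreal (rho T * (1 - \<mu> * eta T))"
      by (rule ennreal_mult[symmetric]) (use rho_nonneg[of T] mu_eta_le[of T] in auto)
    also have "\<dots> \<le> ennreal (\<mu> * (a + real T - 1) ^ 3 / 4)" by (rule ennreal_leI[OF rho_contr])
    finally have "ennreal (rho T) * ennreal (1 - \<mu> * eta T) * AA T \<le> ennreal (\<mu> * (a + real T - 1) ^ 3 / 4) * AA T"
      by (rule mult_right_mono) simp
    moreover have "ennreal (rho T) * ennreal (st T) = ennreal (rho T * st T)"
      by (rule ennreal_mult[symmetric]) (use rho_nonneg[of T] st_nonneg[of T] in auto)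
    ultimately show ?thesis by (simp add: distrib_left mult.assoc[symmetric] add_right_mono)
  qed
  ultimately have step: "ennreal (rho T) * AA (Suc T) + ennreal ((a + real T)\<^sup>2 / 2) * EE T
      \<le> ennreal (\<mu> * (a + real T - 1) ^ 3 / 4) * AA T + ennreal (rho T * st T)"
    by simp
  have IH: "ennreal (\<mu> * (a + real T - 1) ^ 3 / 4) * AA T + (\<Sum>t<T. ennreal ((a + real t)\<^sup>2 / 2) * EE t)
     \<le> ennreal (\<mu> * a ^ 3 / 4) * AA 0 + ennreal (\<Sum>t<T. rho t * st t)"
    using Suc.IH Suc.prems by simp
  have cS: "\<mu> * (a + real (Suc T) - 1) ^ 3 / 4 = rho T" by simp
  have "ennreal (\<mu> * (a + real (Suc T) - 1) ^ 3 / 4) * AA (Suc T) + (\<Sum>t<Suc T. ennreal ((a + real t)\<^sup>2 / 2) * EE t)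
      = (ennreal (rho T) * AA (Suc T) + ennreal ((a + real T)\<^sup>2 / 2) * EE T) + (\<Sum>t<T. ennreal ((a + real t)\<^sup>2 / 2) * EE t)"
    by (simp only: cS sum.lessThan_Suc add_ac)
  also have "\<dots> \<le> (ennreal (\<mu> * (a + real T - 1) ^ 3 / 4) * AA T + ennreal (rho T * st T)) + (\<Sum>t<T. ennreal ((a + real t)\<^sup>2 / 2) * EE t)"
    using step by (rule add_right_mono)
  also have "\<dots> = (ennreal (\<mu> * (a + real T - 1) ^ 3 / 4) * AA T + (\<Sum>t<T. ennreal ((a + real t)\<^sup>2 / 2) * EE t)) + ennreal (rho T * st T)"
    by (simp only: add_ac)
  also have "\<dots> \<le> (ennreal (\<mu> * a ^ 3 / 4) * AA 0 + ennreal (\<Sum>t<T. rho t * st t)) + ennreal (rho T * st T)"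
    using IH by (rule add_right_mono)
  also have "\<dots> = ennreal (\<mu> * a ^ 3 / 4) * AA 0 + ennreal (\<Sum>t<Suc T. rho t * st t)"
  proof -
    have "ennreal (\<Sum>t<T. rho t * st t) + ennreal (rho T * st T) = ennreal ((\<Sum>t<T. rho t * st t) + rho T * st T)"
      by (rule ennreal_plus[symmetric]) (use mu_pos a_pos in \<open>auto intro!: sum_nonneg mult_nonneg_nonneg rho_nonneg st_nonneg\<close>)
    then show ?thesis by (simp only: sum.lessThan_Suc add.assoc)
  qed
  finally show ?case .
qed

lemma sum_lin: "(\<Sum>t<R. a + real t) \<le> real R * (real R + 2 * a) / 2"
proof (induction R)
  case 0 then show ?case by simp
next
  case (Suc R)
  have "(\<Sum>t<Suc R. a + real t) = (\<Sum>t<R. a + real t) + (a + real R)" by simp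
  also have "\<dots> \<le> real R * (real R + 2 * a) / 2 + (a + real R)" using Suc.IH by simp
  also have "\<dots> \<le> real (Suc R) * (real (Suc R) + 2 * a) / 2" by (simp add: algebra_simps)
  finally show ?case .
qed

lemma rho_st_gen:
  fixes m x b s2 c :: real
  assumes "m > 0" "x > 0"
  shows "m * x ^ 3 / 4 * ((4 / (m * x))\<^sup>2 * s2 / k + 8 * b * (4 / (m * x)) ^ 3 * c)
       = 4 * x * s2 / (m * k) + 128 * b * c / m\<^sup>2"
  using assms by (simp add: power3_eq_cube power2_eq_square field_simps)

lemma rho_st: "rho t * st t = 4 * (a + real t) * \<sigma>\<^sup>2 / (\<mu> * real K) + 128 * \<beta> * (G\<^sup>2 * (real H)\<^sup>2) / \<mu>\<^sup>2"
proof -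
  have "rho t * st t = \<mu> * (a + real t) ^ 3 / 4 * ((4 / (\<mu> * (a + real t)))\<^sup>2 * \<sigma>\<^sup>2 / real K + 8 * \<beta> * (4 / (\<mu> * (a + real t))) ^ 3 * (G\<^sup>2 * (real H)\<^sup>2))"
    by (simp only: mult.assoc)
  also have "\<dots> = 4 * (a + real t) * \<sigma>\<^sup>2 / (\<mu> * real K) + 128 * \<beta> * (G\<^sup>2 * (real H)\<^sup>2) / \<mu>\<^sup>2"
    by (rule rho_st_gen) (use mu_pos a_pos in auto)
  finally show ?thesis .
qed

lemma sum_rho_st: "(\<Sum>t<R. rho t * st t) \<le> 2 * real R * (real R + 2 * a) * \<sigma>\<^sup>2 / (\<mu> * real K) + 128 * real R * \<beta> * G\<^sup>2 * (real H)\<^sup>2 / \<mu>\<^sup>2"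
proof -
  have "(\<Sum>t<R. rho t * st t) = (4 * \<sigma>\<^sup>2 / (\<mu> * real K)) * (\<Sum>t<R. a + real t) + real R * (128 * \<beta> * (G\<^sup>2 * (real H)\<^sup>2) / \<mu>\<^sup>2)"
  proof -
    have e: "4 * (a + real t) * \<sigma>\<^sup>2 / (\<mu> * real K) = (4 * \<sigma>\<^sup>2 / (\<mu> * real K)) * (a + real t)" for t
      by simp
    show ?thesis by (simp only: rho_st sum.distrib e sum_distrib_left[symmetric] sum_constant) simp
  qed
  also have "\<dots> \<le> (4 * \<sigma>\<^sup>2 / (\<mu> * real K)) * (real R * (real R + 2 * a) / 2) + real R * (128 * \<beta> * (G\<^sup>2 * (real H)\<^sup>2) / \<mu>\<^sup>2)"
    using mu_pos K by (intro add_right_mono mult_left_mono sum_lin) auto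
  also have "\<dots> = 2 * real R * (real R + 2 * a) * \<sigma>\<^sup>2 / (\<mu> * real K) + 128 * real R * \<beta> * G\<^sup>2 * (real H)\<^sup>2 / \<mu>\<^sup>2"
    using mu_pos K by (simp add: field_simps)
  finally show ?thesis .
qed

lemma final_bound:
  assumes var: "\<forall>r<R. \<forall>k\<in>{1..K}. AE \<omega> in M. (\<integral>\<^sup>+x. ennreal ((norm (g (ww r k \<omega>) x - grad (ww r k \<omega>)))\<^sup>2) \<partial>distr M N (\<xi> r k)) \<le> ennreal (\<sigma>\<^sup>2)"
    and sm: "\<forall>s<R. \<forall>k\<in>{1..K}. AE \<omega> in M. (\<integral>\<^sup>+x. ennreal ((norm (g (ww s k \<omega>) x))\<^sup>2) \<partial>distr M N (\<xi> s k)) \<le> ennreal (G\<^sup>2)"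
    and R: "R \<ge> 1"
    and S: "S = (\<Sum>r<R. (a + real r)\<^sup>2)"
  shows "(\<integral>\<^sup>+\<omega>. ennreal (f ((1 / (real K * S)) *\<^sub>R (\<Sum>k=1..K. \<Sum>r<R. (a + real r)\<^sup>2 *\<^sub>R ww r k \<omega>)) - f wstar) \<partial>M)
      \<le> ennreal (\<mu> * a ^ 3 / (2 * S) * (norm (w0 - wstar))\<^sup>2
                 + 4 * real R * (real R + 2 * a) / (\<mu> * real K * S) * \<sigma>\<^sup>2
                 + 256 * real R / (\<mu>\<^sup>2 * S) * G\<^sup>2 * (real H)\<^sup>2 * \<beta>)"
proof -
  interpret prob_space M by (rule M)
  define lam where "lam r = (a + real r)\<^sup>2 / S" for r
  have Spos: "S > 0"
  proof -
    have "(a + real 0)\<^sup>2 > 0" using a_pos by simp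
    moreover have "(a + real 0)\<^sup>2 \<le> S" unfolding S using R
      by (intro member_le_sum) auto
    ultimately show ?thesis by (rule less_le_trans)
  qed
  have lam_nn: "\<forall>r\<in>{..<R}. 0 \<le> lam r" using Spos by (simp add: lam_def)
  have lam_sum: "(\<Sum>r<R. lam r) = 1" using Spos by (simp add: lam_def S sum_divide_distrib[symmetric])
  have xhat: "(1 / (real K * S)) *\<^sub>R (\<Sum>k=1..K. \<Sum>r<R. (a + real r)\<^sup>2 *\<^sub>R ww r k \<omega>) = (\<Sum>r<R. lam r *\<^sub>R wbar r \<omega>)" for \<omega>
  proof -
    have "(\<Sum>k=1..K. \<Sum>r<R. (a + real r)\<^sup>2 *\<^sub>R ww r k \<omega>) = (\<Sum>r<R. (a + real r)\<^sup>2 *\<^sub>R (\<Sum>k=1..K. ww r k \<omega>))"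
      by (subst sum.swap) (simp only: scaleR_sum_right)
    then show ?thesis using K Spos
      by (simp add: scaleR_sum_right lam_def scaleR_scaleR field_simps)
  qed
  have pw: "f ((1 / (real K * S)) *\<^sub>R (\<Sum>k=1..K. \<Sum>r<R. (a + real r)\<^sup>2 *\<^sub>R ww r k \<omega>)) - f wstar
      \<le> (\<Sum>r<R. lam r * (f (wbar r \<omega>) - f wstar))" for \<omega>
  proof -
    have "f (\<Sum>r<R. lam r *\<^sub>R wbar r \<omega>) \<le> (\<Sum>r<R. lam r * f (wbar r \<omega>))"
      by (rule jensen_f[OF smooth sconv]) (use lam_nn lam_sum in auto)
    moreover have "(\<Sum>r<R. lam r * (f (wbar r \<omega>) - f wstar)) = (\<Sum>r<R. lam r * f (wbar r \<omega>)) - f wstar"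
      using lam_sum by (simp add: right_diff_distrib sum_subtractf sum_distrib_right[symmetric])
    ultimately show ?thesis unfolding xhat by linarith
  qed
  have mF: "(\<lambda>\<omega>. ennreal (f (wbar r \<omega>) - f wstar)) \<in> borel_measurable M" for r using wbar_meas by measurable
  have "(\<integral>\<^sup>+\<omega>. ennreal (f ((1 / (real K * S)) *\<^sub>R (\<Sum>k=1..K. \<Sum>r<R. (a + real r)\<^sup>2 *\<^sub>R ww r k \<omega>)) - f wstar) \<partial>M)
      \<le> (\<integral>\<^sup>+\<omega>. ennreal (\<Sum>r<R. lam r * (f (wbar r \<omega>) - f wstar)) \<partial>M)"
    by (intro nn_integral_mono ennreal_leI pw)
  also have "\<dots> = (\<integral>\<^sup>+\<omega>. (\<Sum>r<R. ennreal (lam r) * ennreal (f (wbar r \<omega>) - f wstar)) \<partial>M)"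
  proof (rule nn_integral_cong)
    fix \<omega>
    have "ennreal (\<Sum>r<R. lam r * (f (wbar r \<omega>) - f wstar)) = (\<Sum>r<R. ennreal (lam r * (f (wbar r \<omega>) - f wstar)))"
      by (rule sum_ennreal[symmetric]) (use lam_nn minimizer in auto)
    also have "\<dots> = (\<Sum>r<R. ennreal (lam r) * ennreal (f (wbar r \<omega>) - f wstar))"
      by (intro sum.cong refl ennreal_mult) (use lam_nn minimizer in auto)
    finally show "ennreal (\<Sum>r<R. lam r * (f (wbar r \<omega>) - f wstar)) = (\<Sum>r<R. ennreal (lam r) * ennreal (f (wbar r \<omega>) - f wstar))" .
  qed
  also have "\<dots> = (\<Sum>r<R. ennreal (lam r) * EE r)"
    using mF by (simp add: nn_integral_sum nn_integral_cmult)
  also have "\<dots> = ennreal (2 / S) * (\<Sum>r<R. ennreal ((a + real r)\<^sup>2 / 2) * EE r)"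
  proof -
    have "ennreal (lam r) = ennreal (2 / S) * ennreal ((a + real r)\<^sup>2 / 2)" for r
    proof -
      have "lam r = (2 / S) * ((a + real r)\<^sup>2 / 2)" by (simp add: lam_def)
      moreover have "ennreal ((2 / S) * ((a + real r)\<^sup>2 / 2)) = ennreal (2 / S) * ennreal ((a + real r)\<^sup>2 / 2)"
        by (rule ennreal_mult) (use Spos in auto)
      ultimately show ?thesis by simp
    qed
    then show ?thesis by (simp add: sum_distrib_left mult.assoc)
  qed
  also have "\<dots> \<le> ennreal (2 / S) * (ennreal (\<mu> * a ^ 3 / 4) * AA 0 + ennreal (\<Sum>t<R. rho t * st t))"
  proof (rule mult_left_mono)
    have "ennreal (\<mu> * (a + real R - 1) ^ 3 / 4) * AA R + (\<Sum>t<R. ennreal ((a + real t)\<^sup>2 / 2) * EE t)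
       \<le> ennreal (\<mu> * a ^ 3 / 4) * AA 0 + ennreal (\<Sum>t<R. rho t * st t)"
      by (rule telescope[OF var sm]) simp
    then show "(\<Sum>t<R. ennreal ((a + real t)\<^sup>2 / 2) * EE t) \<le> ennreal (\<mu> * a ^ 3 / 4) * AA 0 + ennreal (\<Sum>t<R. rho t * st t)"
      by (rule order_trans[rotated]) simp
  qed simp
  also have "AA 0 = ennreal ((norm (w0 - wstar))\<^sup>2)"
  proof -
    have "wbar 0 \<omega> = w0" for \<omega> using K by (simp add: sum_constant_scaleR del: sum_constant)
    then show ?thesis by (simp add: emeasure_space_1)
  qed
  also have "ennreal (2 / S) * (ennreal (\<mu> * a ^ 3 / 4) * ennreal ((norm (w0 - wstar))\<^sup>2) + ennreal (\<Sum>t<R. rho t * st t))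
      = ennreal (2 / S * (\<mu> * a ^ 3 / 4 * (norm (w0 - wstar))\<^sup>2 + (\<Sum>t<R. rho t * st t)))"
  proof -
    have n1: "0 \<le> \<mu> * a ^ 3 / 4" using mu_pos a_pos by simp
    have n2: "0 \<le> (\<Sum>t<R. rho t * st t)" using mu_pos a_pos by (intro sum_nonneg mult_nonneg_nonneg rho_nonneg st_nonneg)
    have n3: "0 \<le> 2 / S" using Spos by simp
    have "ennreal (\<mu> * a ^ 3 / 4) * ennreal ((norm (w0 - wstar))\<^sup>2) = ennreal (\<mu> * a ^ 3 / 4 * (norm (w0 - wstar))\<^sup>2)"
      by (rule ennreal_mult[symmetric]) (use n1 in auto)
    moreover have "ennreal (\<mu> * a ^ 3 / 4 * (norm (w0 - wstar))\<^sup>2) + ennreal (\<Sum>t<R. rho t * st t)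
        = ennreal (\<mu> * a ^ 3 / 4 * (norm (w0 - wstar))\<^sup>2 + (\<Sum>t<R. rho t * st t))"
      by (rule ennreal_plus[symmetric]) (use n1 n2 in auto)
    moreover have "ennreal (2 / S) * ennreal (\<mu> * a ^ 3 / 4 * (norm (w0 - wstar))\<^sup>2 + (\<Sum>t<R. rho t * st t))
        = ennreal (2 / S * (\<mu> * a ^ 3 / 4 * (norm (w0 - wstar))\<^sup>2 + (\<Sum>t<R. rho t * st t)))"
      by (rule ennreal_mult[symmetric]) (use n1 n2 n3 in auto)
    ultimately show ?thesis by simp
  qed
  also have "\<dots> \<le> ennreal (\<mu> * a ^ 3 / (2 * S) * (norm (w0 - wstar))\<^sup>2
                 + 4 * real R * (real R + 2 * a) / (\<mu> * real K * S) * \<sigma>\<^sup>2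
                 + 256 * real R / (\<mu>\<^sup>2 * S) * G\<^sup>2 * (real H)\<^sup>2 * \<beta>)"
  proof (rule ennreal_leI)
    have "2 / S * (\<mu> * a ^ 3 / 4 * (norm (w0 - wstar))\<^sup>2 + (\<Sum>t<R. rho t * st t))
        \<le> 2 / S * (\<mu> * a ^ 3 / 4 * (norm (w0 - wstar))\<^sup>2 + (2 * real R * (real R + 2 * a) * \<sigma>\<^sup>2 / (\<mu> * real K) + 128 * real R * \<beta> * G\<^sup>2 * (real H)\<^sup>2 / \<mu>\<^sup>2))"
      using Spos by (intro mult_left_mono add_left_mono sum_rho_st) auto
    also have "\<dots> = \<mu> * a ^ 3 / (2 * S) * (norm (w0 - wstar))\<^sup>2
                 + 4 * real R * (real R + 2 * a) / (\<mu> * real K * S) * \<sigma>\<^sup>2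
                 + 256 * real R / (\<mu>\<^sup>2 * S) * G\<^sup>2 * (real H)\<^sup>2 * \<beta>"
      using Spos mu_pos K by (simp add: field_simps power2_eq_square)
    finally show "2 / S * (\<mu> * a ^ 3 / 4 * (norm (w0 - wstar))\<^sup>2 + (\<Sum>t<R. rho t * st t))
        \<le> \<mu> * a ^ 3 / (2 * S) * (norm (w0 - wstar))\<^sup>2
                 + 4 * real R * (real R + 2 * a) / (\<mu> * real K * S) * \<sigma>\<^sup>2
                 + 256 * real R / (\<mu>\<^sup>2 * S) * G\<^sup>2 * (real H)\<^sup>2 * \<beta>" .
  qed
  finally show ?thesis .
qed

end

theorem theorem1:
  fixes M :: "'o measure" and N :: "'b measure"
    and f :: "real^'d \<Rightarrow> real" and grad :: "real^'d \<Rightarrow> real^'d"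
    and g :: "real^'d \<Rightarrow> 'b \<Rightarrow> real^'d"
    and \<xi> :: "nat \<Rightarrow> nat \<Rightarrow> 'o \<Rightarrow> 'b"
    and w0 wstar :: "real^'d"
    and \<beta> \<mu> a \<sigma> G :: real
    and K R H L :: nat
    and layer :: "'d \<Rightarrow> nat" and Hl :: "nat \<Rightarrow> nat"
  defines "w \<equiv> (\<lambda>r k \<omega>. psgd w0 g (\<lambda>r k. \<xi> r k \<omega>) (\<lambda>r. 4 / (\<mu> * (a + real r))) H layer Hl K r k)"
    and "p \<equiv> (\<lambda>r. (a + real r)\<^sup>2)"
    and "S \<equiv> (\<Sum>r<R. (a + real r)\<^sup>2)"
  assumes M: "prob_space M"
    and smooth: "smooth_with_grad f grad \<beta>"
    and sconv: "strongly_convex f \<mu>"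
    and minimizer: "\<forall>v. f wstar \<le> f v"
    and K: "K \<ge> 1" and R: "R \<ge> 1" and H: "H \<ge> 1"
    and layers: "\<forall>i. layer i \<in> {1..L}"
    and Hl: "\<forall>l\<in>{1..L}. 1 \<le> Hl l \<and> Hl l \<le> H"
    and a: "a > max (16 * (\<beta> / \<mu>)) (real H)"
    and g_meas: "(\<lambda>(v, x). g v x) \<in> borel_measurable (borel \<Otimes>\<^sub>M N)"
    and xi_meas: "\<forall>r k. \<xi> r k \<in> measurable M N"
    and xi_indep: "prob_space.indep_vars M (\<lambda>_. N) (\<lambda>(r, k). \<xi> r k) (UNIV \<times> {1..K})"
    and unbiased: "\<forall>r k v. integrable (distr M N (\<xi> r k)) (g v)
                     \<and> (\<integral>x. g v x \<partial>distr M N (\<xi> r k)) = grad v"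
    and variance: "\<forall>r<R. \<forall>k\<in>{1..K}. AE \<omega> in M.
        (\<integral>\<^sup>+x. ennreal ((norm (g (w r k \<omega>) x - grad (w r k \<omega>)))\<^sup>2) \<partial>distr M N (\<xi> r k))
          \<le> ennreal (\<sigma>\<^sup>2)"
    and second_moment: "\<forall>r<R. \<forall>k\<in>{1..K}. AE \<omega> in M.
        (\<integral>\<^sup>+x. ennreal ((norm (g (w r k \<omega>) x))\<^sup>2) \<partial>distr M N (\<xi> r k))
          \<le> ennreal (G\<^sup>2)"
  shows "(\<integral>\<^sup>+\<omega>. ennreal (f ((1 / (real K * S)) *\<^sub>R (\<Sum>k=1..K. \<Sum>r<R. p r *\<^sub>R w r k \<omega>)) - f wstar) \<partial>M)
      \<le> ennreal (\<mu> * a ^ 3 / (2 * S) * (norm (w0 - wstar))\<^sup>2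
                 + 4 * real R * (real R + 2 * a) / (\<mu> * real K * S) * \<sigma>\<^sup>2
                 + 256 * real R / (\<mu>\<^sup>2 * S) * G\<^sup>2 * (real H)\<^sup>2 * \<beta>)"
proof -
  have var: "\<forall>r<R. \<forall>k\<in>{1..K}. AE \<omega> in M.
        (\<integral>\<^sup>+x. ennreal ((norm (g (psgd w0 g (\<lambda>r k. \<xi> r k \<omega>) (\<lambda>r. 4 / (\<mu> * (a + real r))) H layer Hl K r k) x
             - grad (psgd w0 g (\<lambda>r k. \<xi> r k \<omega>) (\<lambda>r. 4 / (\<mu> * (a + real r))) H layer Hl K r k)))\<^sup>2) \<partial>distr M N (\<xi> r k))
          \<le> ennreal (\<sigma>\<^sup>2)"
    using variance unfolding w_def .
  have sm: "\<forall>r<R. \<forall>k\<in>{1..K}. AE \<omega> in M.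
        (\<integral>\<^sup>+x. ennreal ((norm (g (psgd w0 g (\<lambda>r k. \<xi> r k \<omega>) (\<lambda>r. 4 / (\<mu> * (a + real r))) H layer Hl K r k) x))\<^sup>2) \<partial>distr M N (\<xi> r k))
          \<le> ennreal (G\<^sup>2)"
    using second_moment unfolding w_def .
  show ?thesis
    unfolding w_def p_def S_def
    by (rule final_bound[OF M smooth sconv minimizer K H a g_meas xi_meas xi_indep unbiased var sm R refl])
qed

end
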